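(* Let $\Gamma=(G,w,\ell)$ be a tropical curve, and let $(P,W)$ and $(P',W')$ be pairs with $P,P'\in\mathcal C_G$, $W,W'\subseteq V$, $P\cup W\neq\emptyset$, $P'\cup W'\ne\emptyset$. Then: (1) $D_{P,W}\sim D_{P',W'}$ if and only if $P=P'$; (2) $[D_{P,W}]$ is a theta-characteristic of $\Gamma$, i.e. $2D_{P,W}\sim K_\Gamma$.
   Context: A tropical curve is a triple $\Gamma=(G,w,\ell)$ where $G=(V,E)$ is a finite connected graph (loops and multiple edges allowed), $w\colon V\to\mathbb Z_{\ge 0}$ with $2w(v)-2+\deg_G(v)>0$ for all $v$ (loops count twice), and $\ell\colon E\to\mathbb R_{>0}$; it is viewed as a metric space with edges segments (circles for loops) of length $\ell(e)$, and $d(p,q)$ is the shortest path length. Extend $w$ to all points by $w(p)=0$ for $p\notin V$. Divisors, rational functions, linear equivalence $\sim$ and $\operatorname{Pic}(\Gamma)$ are the usual tropical ones; $K_\Gamma=\sum_{v\in V}(2w(v)-2+\deg_G(v))v$; a theta-characteristic is a class $[D]$ with $[2D]=[K_\Gamma]$. $\mathcal C_G$ is the set of $P\subseteq E$ such that every vertex has even degree in $P$. For $P\in\mathcal C_G$ and $W\subseteq V$ with $P\cup W\neq\emptyset$, let $\Gamma_{P,W}\subseteq\Gamma$ be the closed subset consisting of the edges in $P$ (with their endpoints) together with the vertices in $W$, and let $d_{P,W}(p)=d(p,\Gamma_{P,W})$. This function is piecewise linear, of slope $0$ on $P$ and $\pm1$ elsewhere, with at most one non-linear (critical) point in the interior of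 each edge. Let $\widehat G_{P,W}$ be the subdivision of $G$ obtained by inserting a vertex at each such interior critical point. The sub-orientation $O_{P,W}$ on $\widehat G_{P,W}$ is: on edges of $P$ choose any cyclic orientation (each vertex has equal in- and out-degree in $P$); orient every other edge of $\widehat G_{P,W}$ in the direction in which $d_{P,W}$ increases. For $p\in\Gamma$ let $\deg^-(p)$ be the number of edges of $\widehat G_{P,W}$ whose target is $p$ if $p\in V(\widehat G_{P,W})$, and $\deg^-(p)=1$ otherwise. Define $D_{P,W}:=\sum_{p\in\Gamma}(\deg^-(p)-1+w(p))p$ (a finite sum supported on $V(\widehat G_{P,W})$). *)

theory Defs
  imports Complex_Main
begin

text \<open>A finite graph with vertex set verts, edge set edges; each edge e has a
  reference parametrisation from src e to tgt e (loops: src e = tgt e).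
  Points of the metric graph: vertices, and interior points Pt e t with 0 < t < len e.\<close>

record ('v, 'e) tcurve =
  verts :: "'v set"
  edges :: "'e set"
  src   :: "'e \<Rightarrow> 'v"
  tgt   :: "'e \<Rightarrow> 'v"
  wt    :: "'v \<Rightarrow> nat"
  len   :: "'e \<Rightarrow> real"

datatype ('v, 'e) point = Vtx 'v | Pt 'e real

fun walk :: "('v, 'e) tcurve \<Rightarrow> 'v \<Rightarrow> ('e \<times> bool) list \<Rightarrow> 'v \<Rightarrow> bool" where
  "walk G u [] v = (u = v)"
| "walk G u ((e, b) # es) v =
     (e \<in> edges G \<and>
      (if b then src G e = u \<and> walk G (tgt G e) es v
            else tgt G e = u \<and> walk G (src G e) es v))"

definition walk_len :: "('v, 'e) tcurve \<Rightarrow> ('e \<times> bool) list \<Rightarrow> real" where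
  "walk_len G es = sum_list (map (\<lambda>(e, b). len G e) es)"

text \<open>degree (loops count twice)\<close>
definition vdeg :: "('v, 'e) tcurve \<Rightarrow> 'e set \<Rightarrow> 'v \<Rightarrow> nat" where
  "vdeg G P v = card {e \<in> P. src G e = v} + card {e \<in> P. tgt G e = v}"

definition tropical_curve :: "('v, 'e) tcurve \<Rightarrow> bool" where
  "tropical_curve G \<longleftrightarrow>
     finite (verts G) \<and> finite (edges G) \<and> verts G \<noteq> {} \<and>
     (\<forall>e \<in> edges G. src G e \<in> verts G \<and> tgt G e \<in> verts G \<and> len G e > 0) \<and>
     (\<forall>u \<in> verts G. \<forall>v \<in> verts G. \<exists>es. walk G u es v) \<and>
     (\<forall>v \<in> verts G. 2 * int (wt G v) - 2 + int (vdeg G (edges G) v) > 0)"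

definition points :: "('v, 'e) tcurve \<Rightarrow> ('v, 'e) point set" where
  "points G = Vtx ` verts G \<union> {Pt e t | e t. e \<in> edges G \<and> 0 < t \<and> t < len G e}"

definition vdist :: "('v, 'e) tcurve \<Rightarrow> 'v \<Rightarrow> 'v \<Rightarrow> real" where
  "vdist G u v = Inf {walk_len G es | es. walk G u es v}"

fun ends :: "('v, 'e) tcurve \<Rightarrow> ('v, 'e) point \<Rightarrow> ('v \<times> real) set" where
  "ends G (Vtx v) = {(v, 0)}"
| "ends G (Pt e t) = {(src G e, t), (tgt G e, len G e - t)}"

fun same_edge_dist :: "('v, 'e) point \<Rightarrow> ('v, 'e) point \<Rightarrow> real set" where
  "same_edge_dist (Pt e s) (Pt e' t) = (if e = e' then {\<bar>s - t\<bar>} else {})"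
| "same_edge_dist _ _ = {}"

text \<open>shortest path length between two points of the metric graph: a shortest path
  either stays inside one edge or leaves the start point through one of its bounding
  vertices and enters the end point through one of its bounding vertices\<close>
definition tdist :: "('v, 'e) tcurve \<Rightarrow> ('v, 'e) point \<Rightarrow> ('v, 'e) point \<Rightarrow> real" where
  "tdist G p q = Min ({x + vdist G a b + y | a x b y. (a, x) \<in> ends G p \<and> (b, y) \<in> ends G q}
                      \<union> same_edge_dist p q)"

definition at_param :: "('v, 'e) tcurve \<Rightarrow> 'e \<Rightarrow> real \<Rightarrow> ('v, 'e) point" where
  "at_param G e t = (if t \<le> 0 then Vtx (src G e) else if len G e \<le> t then Vtx (tgt G e) else Pt e t)"

type_synonym ('v, 'e) divisor = "('v, 'e) point \<Rightarrow> int"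

definition pw_linear_int :: "(real \<Rightarrow> real) \<Rightarrow> real \<Rightarrow> real \<Rightarrow> bool" where
  "pw_linear_int g a b \<longleftrightarrow>
     (\<exists>xs :: real list. length xs \<ge> 2 \<and> sorted_wrt (<) xs \<and> hd xs = a \<and> last xs = b \<and>
        (\<forall>i < length xs - 1. \<exists>m :: int. \<exists>c :: real.
            \<forall>s \<in> {xs ! i .. xs ! (i + 1)}. g s = of_int m * s + c))"

definition rational_fun :: "('v, 'e) tcurve \<Rightarrow> (('v, 'e) point \<Rightarrow> real) \<Rightarrow> bool" where
  "rational_fun G f \<longleftrightarrow> (\<forall>e \<in> edges G. pw_linear_int (\<lambda>t. f (at_param G e t)) 0 (len G e))"

definition rslope :: "(real \<Rightarrow> real) \<Rightarrow> real \<Rightarrow> real" where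
  "rslope g x = (THE D. (g has_real_derivative D) (at_right x))"

definition lslope :: "(real \<Rightarrow> real) \<Rightarrow> real \<Rightarrow> real" where
  "lslope g x = (THE D. (g has_real_derivative D) (at_left x))"

text \<open>order of f at p: sum of the outgoing slopes of f at p\<close>
fun ord_at :: "('v, 'e) tcurve \<Rightarrow> (('v, 'e) point \<Rightarrow> real) \<Rightarrow> ('v, 'e) point \<Rightarrow> real" where
  "ord_at G f (Vtx v) =
     (\<Sum>e \<in> {e \<in> edges G. src G e = v}. rslope (\<lambda>t. f (at_param G e t)) 0)
   + (\<Sum>e \<in> {e \<in> edges G. tgt G e = v}. - lslope (\<lambda>t. f (at_param G e t)) (len G e))"
| "ord_at G f (Pt e t) =
     rslope (\<lambda>s. f (at_param G e s)) t - lslope (\<lambda>s. f (at_param G e s)) t"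

definition lin_equiv :: "('v, 'e) tcurve \<Rightarrow> ('v, 'e) divisor \<Rightarrow> ('v, 'e) divisor \<Rightarrow> bool" where
  "lin_equiv G D1 D2 \<longleftrightarrow>
     (\<exists>f. rational_fun G f \<and> (\<forall>p \<in> points G. of_int (D1 p - D2 p) = ord_at G f p))"

definition canonical :: "('v, 'e) tcurve \<Rightarrow> ('v, 'e) divisor" where
  "canonical G p = (case p of
      Vtx v \<Rightarrow> if v \<in> verts G then 2 * int (wt G v) - 2 + int (vdeg G (edges G) v) else 0
    | Pt e t \<Rightarrow> 0)"

definition even_subgraph :: "('v, 'e) tcurve \<Rightarrow> 'e set \<Rightarrow> bool" where
  "even_subgraph G P \<longleftrightarrow> P \<subseteq> edges G \<and> (\<forall>v \<in> verts G. even (vdeg G P v))"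

text \<open>ori e = True: edge e oriented from src e to tgt e\<close>
definition head :: "('v, 'e) tcurve \<Rightarrow> ('e \<Rightarrow> bool) \<Rightarrow> 'e \<Rightarrow> 'v" where
  "head G ori e = (if ori e then tgt G e else src G e)"

definition tail :: "('v, 'e) tcurve \<Rightarrow> ('e \<Rightarrow> bool) \<Rightarrow> 'e \<Rightarrow> 'v" where
  "tail G ori e = (if ori e then src G e else tgt G e)"

definition cyclic_orient :: "('v, 'e) tcurve \<Rightarrow> 'e set \<Rightarrow> ('e \<Rightarrow> bool) \<Rightarrow> bool" where
  "cyclic_orient G P ori \<longleftrightarrow>
     (\<forall>v \<in> verts G. card {e \<in> P. head G ori e = v} = card {e \<in> P. tail G ori e = v})"

definition GammaPW :: "('v, 'e) tcurve \<Rightarrow> 'e set \<Rightarrow> 'v set \<Rightarrow> ('v, 'e) point set" where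
  "GammaPW G P W = Vtx ` W \<union> {Vtx (src G e) | e. e \<in> P} \<union> {Vtx (tgt G e) | e. e \<in> P}
                   \<union> {Pt e t | e t. e \<in> P \<and> 0 < t \<and> t < len G e}"

definition dPW :: "('v, 'e) tcurve \<Rightarrow> 'e set \<Rightarrow> 'v set \<Rightarrow> ('v, 'e) point \<Rightarrow> real" where
  "dPW G P W p = Inf (tdist G p ` GammaPW G P W)"

definition nonlinear_at :: "(real \<Rightarrow> real) \<Rightarrow> real \<Rightarrow> bool" where
  "nonlinear_at h t \<longleftrightarrow> \<not> (\<exists>a b \<epsilon>. \<epsilon> > 0 \<and> (\<forall>s. \<bar>s - t\<bar> < \<epsilon> \<longrightarrow> h s = a * s + b))"

definition is_crit :: "('v, 'e) tcurve \<Rightarrow> 'e set \<Rightarrow> 'v set \<Rightarrow> 'e \<Rightarrow> real \<Rightarrow> bool" where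
  "is_crit G P W e t \<longleftrightarrow> 0 < t \<and> t < len G e \<and> nonlinear_at (\<lambda>s. dPW G P W (at_param G e s)) t"

definition has_crit :: "('v, 'e) tcurve \<Rightarrow> 'e set \<Rightarrow> 'v set \<Rightarrow> 'e \<Rightarrow> bool" where
  "has_crit G P W e \<longleftrightarrow> (\<exists>t. is_crit G P W e t)"

definition crit_pt :: "('v, 'e) tcurve \<Rightarrow> 'e set \<Rightarrow> 'v set \<Rightarrow> 'e \<Rightarrow> ('v, 'e) point" where
  "crit_pt G P W e = Pt e (SOME t. is_crit G P W e t)"

text \<open>Edges of the subdivision \<open>\<widehat>G_{P,W}\<close>: an edge without interior critical point stays whole,
  an edge with one is split into a lower and an upper piece.\<close>
datatype piece = Whole | Lo | Hi

definition sub_edges :: "('v, 'e) tcurve \<Rightarrow> 'e set \<Rightarrow> 'v set \<Rightarrow> ('e \<times> piece) set" where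
  "sub_edges G P W = {(e, Whole) | e. e \<in> edges G \<and> \<not> has_crit G P W e}
                   \<union> {(e, pc) | e pc. e \<in> edges G \<and> has_crit G P W e \<and> pc \<noteq> Whole}"

definition sub_verts :: "('v, 'e) tcurve \<Rightarrow> 'e set \<Rightarrow> 'v set \<Rightarrow> ('v, 'e) point set" where
  "sub_verts G P W = Vtx ` verts G \<union> {crit_pt G P W e | e. e \<in> edges G \<and> has_crit G P W e}"

fun ep1 :: "('v, 'e) tcurve \<Rightarrow> 'e set \<Rightarrow> 'v set \<Rightarrow> 'e \<times> piece \<Rightarrow> ('v, 'e) point" where
  "ep1 G P W (e, Hi) = crit_pt G P W e"
| "ep1 G P W (e, _) = Vtx (src G e)"

fun ep2 :: "('v, 'e) tcurve \<Rightarrow> 'e set \<Rightarrow> 'v set \<Rightarrow> 'e \<times> piece \<Rightarrow> ('v, 'e) point" where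
  "ep2 G P W (e, Lo) = crit_pt G P W e"
| "ep2 G P W (e, _) = Vtx (tgt G e)"

text \<open>Target of a subdivided edge under the sub-orientation O_{P,W}: edges of P are oriented by
  the cyclic orientation ori; every other edge (on which d_{P,W} is linear of slope +-1) is oriented
  in the direction in which d_{P,W} increases, i.e. towards its endpoint with larger d_{P,W}.\<close>
definition sub_target :: "('v, 'e) tcurve \<Rightarrow> 'e set \<Rightarrow> 'v set \<Rightarrow> ('e \<Rightarrow> bool) \<Rightarrow> 'e \<times> piece
                           \<Rightarrow> ('v, 'e) point" where
  "sub_target G P W ori x =
     (if fst x \<in> P then (if ori (fst x) then ep2 G P W x else ep1 G P W x)
      else (if dPW G P W (ep1 G P W x) \<le> dPW G P W (ep2 G P W x) then ep2 G P W x else ep1 G P W x))"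

definition indeg :: "('v, 'e) tcurve \<Rightarrow> 'e set \<Rightarrow> 'v set \<Rightarrow> ('e \<Rightarrow> bool) \<Rightarrow> ('v, 'e) point \<Rightarrow> int" where
  "indeg G P W ori p =
     (if p \<in> sub_verts G P W then int (card {x \<in> sub_edges G P W. sub_target G P W ori x = p}) else 1)"

definition wext :: "('v, 'e) tcurve \<Rightarrow> ('v, 'e) point \<Rightarrow> int" where
  "wext G p = (case p of Vtx v \<Rightarrow> int (wt G v) | Pt e t \<Rightarrow> 0)"

definition D_PW :: "('v, 'e) tcurve \<Rightarrow> 'e set \<Rightarrow> 'v set \<Rightarrow> ('e \<Rightarrow> bool) \<Rightarrow> ('v, 'e) divisor" where
  "D_PW G P W ori p = (if p \<in> points G then indeg G P W ori p - 1 + wext G p else 0)"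

end

theory Submission
  imports Defs
begin

definition aff :: "real set \<Rightarrow> (real \<Rightarrow> real) \<Rightarrow> real \<Rightarrow> real \<Rightarrow> bool" where
  "aff S g a b \<longleftrightarrow> (\<exists>m\<in>S. \<exists>c. \<forall>s\<in>{a..b}. g s = m * s + c)"

inductive pwi :: "real set \<Rightarrow> (real \<Rightarrow> real) \<Rightarrow> real \<Rightarrow> real \<Rightarrow> bool" for S g where
  base: "a < b \<Longrightarrow> aff S g a b \<Longrightarrow> pwi S g a b"
| step: "a < x \<Longrightarrow> aff S g a x \<Longrightarrow> pwi S g x b \<Longrightarrow> pwi S g a b"

lemma pwi_less: "pwi S g a b \<Longrightarrow> a < b"
  by (induction rule: pwi.induct) auto

lemma aff_sub: "aff S g a b \<Longrightarrow> a \<le> a' \<Longrightarrow> b' \<le> b \<Longrightarrow> aff S g a' b'"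
  unfolding aff_def by force

lemma aff_cong: "aff S g a b \<Longrightarrow> (\<And>s. a \<le> s \<Longrightarrow> s \<le> b \<Longrightarrow> g s = g' s) \<Longrightarrow> aff S g' a b"
proof -
  assume "aff S g a b" and h: "\<And>s. a \<le> s \<Longrightarrow> s \<le> b \<Longrightarrow> g s = g' s"
  then obtain m d where "m \<in> S" "\<forall>s\<in>{a..b}. g s = m * s + d" unfolding aff_def by blast
  then show ?thesis unfolding aff_def using h by (intro bexI[of _ m] exI[of _ d]) auto
qed

lemma aff_mono: "aff S g a b \<Longrightarrow> S \<subseteq> S' \<Longrightarrow> aff S' g a b"
  unfolding aff_def by blast

lemma pwi_mono: "pwi S g a b \<Longrightarrow> S \<subseteq> S' \<Longrightarrow> pwi S' g a b"
  by (induction rule: pwi.induct) (auto intro: pwi.intros aff_mono)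

lemma pwi_cong: "pwi S g a b \<Longrightarrow> (\<And>s. a \<le> s \<Longrightarrow> s \<le> b \<Longrightarrow> g s = g' s) \<Longrightarrow> pwi S g' a b"
proof (induction rule: pwi.induct)
  case (base a b) then show ?case by (intro pwi.base) (auto intro: aff_cong)
next
  case (step a x b)
  have "x \<le> b" using step.hyps(3) pwi_less by fastforce
  then show ?case using step by (intro pwi.step[of a x]) (auto intro: aff_cong)
qed

lemma pwi_split: "pwi S g a b \<Longrightarrow> a < t \<Longrightarrow> t < b \<Longrightarrow> pwi S g a t \<and> pwi S g t b"
proof (induction arbitrary: t rule: pwi.induct)
  case (base a b) then show ?case by (auto intro!: pwi.base elim: aff_sub)
next
  case (step a x b)
  show ?case
  proof (cases "t < x")
    case True
    have "pwi S g a t" using True step by (intro pwi.base) (auto elim: aff_sub)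
    moreover have "pwi S g t b" using True step by (intro pwi.step[of t x]) (auto elim: aff_sub)
    ultimately show ?thesis by simp
  next
    case False
    show ?thesis
    proof (cases "t = x")
      case True then show ?thesis using step by (auto intro: pwi.base)
    next
      case False
      then have "x < t" using \<open>\<not> t < x\<close> by simp
      then show ?thesis using step by (auto intro: pwi.step)
    qed
  qed
qed

lemma pwi_concat: "pwi S g a b \<Longrightarrow> pwi S g b c \<Longrightarrow> pwi S g a c"
  by (induction rule: pwi.induct) (auto intro: pwi.step)

definition sumset :: "real set \<Rightarrow> real set \<Rightarrow> real set" where
  "sumset A B = {x + y | x y. x \<in> A \<and> y \<in> B}"

lemma aff_add: "aff S1 g1 a b \<Longrightarrow> aff S2 g2 a b \<Longrightarrow> aff (sumset S1 S2) (\<lambda>s. g1 s + g2 s) a b"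
proof -
  assume "aff S1 g1 a b" "aff S2 g2 a b"
  then obtain m1 c1 m2 c2 where "m1 \<in> S1" "m2 \<in> S2" "\<forall>s\<in>{a..b}. g1 s = m1 * s + c1"
    "\<forall>s\<in>{a..b}. g2 s = m2 * s + c2" unfolding aff_def by blast
  then show ?thesis unfolding aff_def sumset_def
    by (intro bexI[of _ "m1 + m2"] exI[of _ "c1 + c2"]) (auto simp: algebra_simps)
qed

lemma pwi_add_aff: "pwi S2 g2 a b \<Longrightarrow> aff S1 g1 a b \<Longrightarrow> pwi (sumset S1 S2) (\<lambda>s. g1 s + g2 s) a b"
proof (induction rule: pwi.induct)
  case (base a b) then show ?case by (auto intro: pwi.base aff_add)
next
  case (step a x b)
  have "x \<le> b" using step.hyps(3) pwi_less by fastforce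
  have "aff S1 g1 a x" "aff S1 g1 x b" using step.prems \<open>x \<le> b\<close> step.hyps(1) by (auto elim: aff_sub)
  then show ?case using step by (intro pwi.step[of a x]) (auto intro: aff_add)
qed

lemma pwi_add: "pwi S1 g1 a b \<Longrightarrow> pwi S2 g2 a b \<Longrightarrow> pwi (sumset S1 S2) (\<lambda>s. g1 s + g2 s) a b"
proof (induction arbitrary: rule: pwi.induct)
  case (base a b) then show ?case using pwi_add_aff by blast
next
  case (step a x b)
  from step.prems have "a < b" using pwi_less by blast
  have "x < b" using step.hyps(3) pwi_less by blast
  from pwi_split[OF step.prems step.hyps(1) this] have s: "pwi S2 g2 a x" "pwi S2 g2 x b" by auto
  have "pwi (sumset S1 S2) (\<lambda>s. g1 s + g2 s) a x" using pwi_add_aff[OF s(1) step.hyps(2)] .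
  moreover have "pwi (sumset S1 S2) (\<lambda>s. g1 s + g2 s) x b" using step.IH[OF s(2)] .
  ultimately show ?case by (rule pwi_concat)
qed

lemma aff_scale: "aff S g a b \<Longrightarrow> aff ((*) c ` S) (\<lambda>s. c * g s) a b"
proof -
  assume "aff S g a b"
  then obtain m d where "m \<in> S" "\<forall>s\<in>{a..b}. g s = m * s + d" unfolding aff_def by blast
  then show ?thesis unfolding aff_def
    by (intro bexI[of _ "c * m"] exI[of _ "c * d"]) (auto simp: algebra_simps)
qed

lemma pwi_scale: "pwi S g a b \<Longrightarrow> pwi ((*) c ` S) (\<lambda>s. c * g s) a b"
  by (induction rule: pwi.induct) (auto intro: pwi.intros aff_scale)

lemma pwl_imp_pwi:
  assumes "length xs \<ge> 2" "sorted_wrt (<) xs" "hd xs = a" "last xs = b"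
    "\<forall>i < length xs - 1. \<exists>m :: int. \<exists>c :: real. \<forall>s \<in> {xs ! i .. xs ! (i + 1)}. g s = of_int m * s + c"
  shows "pwi \<int> g a b"
  using assms
proof (induction xs arbitrary: a)
  case Nil then show ?case by simp
next
  case (Cons y ys)
  then obtain z zs where ys: "ys = z # zs" by (cases ys) auto
  have a: "a = y" using Cons by simp
  have yz: "y < z" using Cons.prems(2) ys by simp
  have affyz: "aff \<int> g y z"
    using Cons.prems(5)[rule_format, of 0] ys unfolding aff_def by (auto simp: Ints_def) 
  show ?case
  proof (cases zs)
    case Nil
    then show ?thesis using Cons.prems ys a yz affyz by (auto intro: pwi.base)
  next
    case (Cons w ws)
    have "pwi \<int> g z b"
    proof (rule Cons.IH)
      show "2 \<le> length ys" using ys Cons by simp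
      show "sorted_wrt (<) ys" using Cons.prems(2) by simp
      show "hd ys = z" using ys by simp
      show "last ys = b" using Cons.prems(4) ys by simp
      show "\<forall>i<length ys - 1. \<exists>m::int. \<exists>c. \<forall>s\<in>{ys ! i..ys ! (i + 1)}. g s = of_int m * s + c"
      proof (intro allI impI)
        fix i assume "i < length ys - 1"
        then show "\<exists>m::int. \<exists>c. \<forall>s\<in>{ys ! i..ys ! (i + 1)}. g s = of_int m * s + c"
          using Cons.prems(5)[rule_format, of "Suc i"] by simp
      qed
    qed
    then show ?thesis using a yz affyz by (auto intro: pwi.step)
  qed
qed

lemma pwi_imp_pwl:
  assumes "pwi \<int> g a b"
  shows "\<exists>xs. length xs \<ge> 2 \<and> sorted_wrt (<) xs \<and> hd xs = a \<and> last xs = b \<and>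
     (\<forall>i < length xs - 1. \<exists>m :: int. \<exists>c :: real. \<forall>s \<in> {xs ! i .. xs ! (i + 1)}. g s = of_int m * s + c)"
  using assms
proof (induction rule: pwi.induct)
  case (base a b)
  then obtain m c where "m \<in> \<int>" "\<forall>s\<in>{a..b}. g s = m * s + c" unfolding aff_def by auto
  then obtain k where "m = of_int k" by (auto elim: Ints_cases)
  then show ?case using base \<open>\<forall>s\<in>{a..b}. g s = m * s + c\<close>
    by (intro exI[of _ "[a,b]"]) auto
next
  case (step a x b)
  then obtain xs where xs: "length xs \<ge> 2" "sorted_wrt (<) xs" "hd xs = x" "last xs = b"
    "\<forall>i < length xs - 1. \<exists>m :: int. \<exists>c :: real. \<forall>s \<in> {xs ! i .. xs ! (i + 1)}. g s = of_int m * s + c"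
    by blast
  obtain m c where "m \<in> \<int>" "\<forall>s\<in>{a..x}. g s = m * s + c" using step unfolding aff_def by auto
  then obtain k where k: "m = of_int k" by (auto elim: Ints_cases)
  obtain y ys where xs0: "xs = y # ys" using xs(1) by (cases xs) auto
  have "y = x" using xs(3) xs0 by simp
  show ?case
  proof (intro exI[of _ "a # xs"] conjI)
    show "2 \<le> length (a # xs)" using xs by simp
    show "sorted_wrt (<) (a # xs)" using xs(2) xs0 \<open>y = x\<close> step(1)
      by (auto simp: xs0 intro: less_trans)
    show "hd (a # xs) = a" by simp
    show "last (a # xs) = b" using xs xs0 by simp
    show "\<forall>i<length (a # xs) - 1. \<exists>m::int. \<exists>c. \<forall>s\<in>{(a # xs) ! i..(a # xs) ! (i + 1)}. g s = of_int m * s + c"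
    proof (intro allI impI)
      fix i assume i: "i < length (a # xs) - 1"
      show "\<exists>m::int. \<exists>c. \<forall>s\<in>{(a # xs) ! i..(a # xs) ! (i + 1)}. g s = of_int m * s + c"
      proof (cases i)
        case 0 then show ?thesis using xs0 \<open>y = x\<close> k \<open>\<forall>s\<in>{a..x}. g s = m * s + c\<close> by auto
      next
        case (Suc j) then show ?thesis using xs(5) i by auto
      qed
    qed
  qed
qed

lemma pw_linear_int_iff: "pw_linear_int g a b \<longleftrightarrow> pwi \<int> g a b"
  unfolding pw_linear_int_def using pwl_imp_pwi pwi_imp_pwl by blast

definition RA :: "(real \<Rightarrow> real) \<Rightarrow> real \<Rightarrow> real \<Rightarrow> bool" where
  "RA g x m \<longleftrightarrow> (\<exists>\<delta>>0. \<exists>c. \<forall>y\<in>{x..x+\<delta>}. g y = m * y + c)"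

definition LA :: "(real \<Rightarrow> real) \<Rightarrow> real \<Rightarrow> real \<Rightarrow> bool" where
  "LA g x m \<longleftrightarrow> (\<exists>\<delta>>0. \<exists>c. \<forall>y\<in>{x-\<delta>..x}. g y = m * y + c)"

lemma RA_deriv: assumes "RA g x m" shows "(g has_real_derivative m) (at_right x)"
proof -
  obtain \<delta> c where d: "\<delta> > 0" "\<forall>y\<in>{x..x+\<delta>}. g y = m * y + c" using assms RA_def by auto
  have "((\<lambda>y. m * y + c) has_real_derivative m) (at_right x)"
    by (auto intro!: derivative_eq_intros)
  moreover have "eventually (\<lambda>y. m * y + c = g y) (at_right x)"
    unfolding eventually_at_right_field using d
    by (intro exI[of _ "x + \<delta>"]) auto
  moreover have "m * x + c = g x" using d by auto
  ultimately show ?thesis using has_field_derivative_cong_eventually[of "\<lambda>y. m * y + c" g x] by metis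
qed

lemma LA_deriv: assumes "LA g x m" shows "(g has_real_derivative m) (at_left x)"
proof -
  obtain \<delta> c where d: "\<delta> > 0" "\<forall>y\<in>{x-\<delta>..x}. g y = m * y + c" using assms LA_def by auto
  have "((\<lambda>y. m * y + c) has_real_derivative m) (at_left x)"
    by (auto intro!: derivative_eq_intros)
  moreover have "eventually (\<lambda>y. m * y + c = g y) (at_left x)"
    unfolding eventually_at_left_field using d
    by (intro exI[of _ "x - \<delta>"]) auto
  moreover have "m * x + c = g x" using d by auto
  ultimately show ?thesis using has_field_derivative_cong_eventually[of "\<lambda>y. m * y + c" g x] by metis
qed

lemma deriv_right_unique:
  "(g has_real_derivative a) (at_right x) \<Longrightarrow> (g has_real_derivative b) (at_right x) \<Longrightarrow> a = b"
  unfolding has_field_derivative_iff using tendsto_unique trivial_limit_at_right_real by blast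

lemma deriv_left_unique:
  "(g has_real_derivative a) (at_left x) \<Longrightarrow> (g has_real_derivative b) (at_left x) \<Longrightarrow> a = b"
  unfolding has_field_derivative_iff using tendsto_unique trivial_limit_at_left_real by blast

lemma RA_rslope: "RA g x m \<Longrightarrow> rslope g x = m"
  unfolding rslope_def using RA_deriv deriv_right_unique by blast

lemma LA_lslope: "LA g x m \<Longrightarrow> lslope g x = m"
  unfolding lslope_def using LA_deriv deriv_left_unique by blast

lemma RA_lin: "RA g1 x m1 \<Longrightarrow> RA g2 x m2 \<Longrightarrow> RA (\<lambda>y. c1 * g1 y + c2 * g2 y) x (c1 * m1 + c2 * m2)"
proof -
  assume "RA g1 x m1" "RA g2 x m2"
  then obtain d1 a1 d2 a2 where "d1 > 0" "\<forall>y\<in>{x..x+d1}. g1 y = m1 * y + a1"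
    "d2 > 0" "\<forall>y\<in>{x..x+d2}. g2 y = m2 * y + a2" unfolding RA_def by blast
  then show ?thesis unfolding RA_def
    by (intro exI[of _ "min d1 d2"] conjI exI[of _ "c1 * a1 + c2 * a2"]) (auto simp: algebra_simps)
qed

lemma LA_lin: "LA g1 x m1 \<Longrightarrow> LA g2 x m2 \<Longrightarrow> LA (\<lambda>y. c1 * g1 y + c2 * g2 y) x (c1 * m1 + c2 * m2)"
proof -
  assume "LA g1 x m1" "LA g2 x m2"
  then obtain d1 a1 d2 a2 where "d1 > 0" "\<forall>y\<in>{x-d1..x}. g1 y = m1 * y + a1"
    "d2 > 0" "\<forall>y\<in>{x-d2..x}. g2 y = m2 * y + a2" unfolding LA_def by blast
  then show ?thesis unfolding LA_def
    by (intro exI[of _ "min d1 d2"] conjI exI[of _ "c1 * a1 + c2 * a2"]) (auto simp: algebra_simps)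
qed

lemma aff_RA: "aff S g a b \<Longrightarrow> a \<le> x \<Longrightarrow> x < b \<Longrightarrow> \<exists>m\<in>S. RA g x m"
proof -
  assume "aff S g a b" "a \<le> x" "x < b"
  then obtain m c where "m \<in> S" "\<forall>s\<in>{a..b}. g s = m * s + c" unfolding aff_def by blast
  then show ?thesis unfolding RA_def using \<open>a \<le> x\<close> \<open>x < b\<close>
    by (intro bexI[of _ m] exI[of _ "b - x"] conjI exI[of _ c]) auto
qed

lemma aff_LA: "aff S g a b \<Longrightarrow> a < x \<Longrightarrow> x \<le> b \<Longrightarrow> \<exists>m\<in>S. LA g x m"
proof -
  assume "aff S g a b" "a < x" "x \<le> b"
  then obtain m c where "m \<in> S" "\<forall>s\<in>{a..b}. g s = m * s + c" unfolding aff_def by blast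
  then show ?thesis unfolding LA_def using \<open>a < x\<close> \<open>x \<le> b\<close>
    by (intro bexI[of _ m] exI[of _ "x - a"] conjI exI[of _ c]) auto
qed

lemma pwi_RA: "pwi S g a b \<Longrightarrow> a \<le> x \<Longrightarrow> x < b \<Longrightarrow> \<exists>m\<in>S. RA g x m"
proof (induction rule: pwi.induct)
  case (base a b) then show ?case using aff_RA by blast
next
  case (step a x' b) then show ?case using aff_RA[of S g a x' x] by (cases "x < x'") auto
qed

lemma pwi_LA: "pwi S g a b \<Longrightarrow> a < x \<Longrightarrow> x \<le> b \<Longrightarrow> \<exists>m\<in>S. LA g x m"
proof (induction rule: pwi.induct)
  case (base a b) then show ?case using aff_LA by blast
next
  case (step a x' b) then show ?case using aff_LA[of S g a x' x] by (cases "x \<le> x'") auto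
qed

lemma pwi_affine:
  "pwi S g a b \<Longrightarrow> (\<And>t. a < t \<Longrightarrow> t < b \<Longrightarrow> rslope g t = lslope g t) \<Longrightarrow>
   \<exists>m c. \<forall>s\<in>{a..b}. g s = m * s + c"
proof (induction rule: pwi.induct)
  case (base a b) then show ?case unfolding aff_def by blast
next
  case (step a x b)
  obtain m c where mc: "\<forall>s\<in>{x..b}. g s = m * s + c" using step by auto
  obtain m' c' where mc': "\<forall>s\<in>{a..x}. g s = m' * s + c'" using step(2) unfolding aff_def by blast
  have xb: "x < b" using step(3) pwi_less by blast
  have "RA g x m" unfolding RA_def using mc xb by (intro exI[of _ "b - x"]) auto
  moreover have "LA g x m'" unfolding LA_def using mc' step(1) by (intro exI[of _ "x - a"]) auto
  ultimately have "m = m'" using step.prems[of x] step(1) xb RA_rslope LA_lslope by auto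
  moreover have "m * x + c = m' * x + c'"
  proof -
    have "g x = m * x + c" using mc xb by auto
    moreover have "g x = m' * x + c'" using mc' step(1) by auto
    ultimately show ?thesis by simp
  qed
  ultimately have "c = c'" by simp
  have "\<forall>s\<in>{a..b}. g s = m * s + c"
  proof
    fix s assume "s \<in> {a..b}"
    then show "g s = m * s + c" using mc mc' \<open>m = m'\<close> \<open>c = c'\<close> by (cases "s \<le> x") auto
  qed
  then show ?case by blast
qed

lemma walk_len_Nil[simp]: "walk_len G [] = 0" by (simp add: walk_len_def)
lemma walk_len_Cons[simp]: "walk_len G ((e, b) # es) = len G e + walk_len G es"
  by (simp add: walk_len_def)

lemma finite_ends: "finite (ends G p)" by (cases p) auto
lemma ends_ne: "ends G p \<noteq> {}" by (cases p) auto
lemma finite_sed: "finite (same_edge_dist p q)" by (cases "(p,q)" rule: same_edge_dist.cases) auto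

lemma sed_nonneg: "z \<in> same_edge_dist p q \<Longrightarrow> z \<ge> 0"
  by (cases "(p,q)" rule: same_edge_dist.cases) (auto split: if_splits)

definition TS where "TS G p q = (\<lambda>((a,x),(b,y)). x + vdist G a b + y) ` (ends G p \<times> ends G q) \<union> same_edge_dist p q"

lemma tdist_TS: "tdist G p q = Min (TS G p q)"
proof -
  have "{x + vdist G a b + y | a x b y. (a, x) \<in> ends G p \<and> (b, y) \<in> ends G q}
      = (\<lambda>((a,x),(b,y)). x + vdist G a b + y) ` (ends G p \<times> ends G q)"
    by (auto simp: image_iff) (metis case_prod_conv)
  then show ?thesis unfolding tdist_def TS_def by simp
qed

lemma finite_TS: "finite (TS G p q)" unfolding TS_def using finite_ends finite_sed by auto
lemma TS_ne: "TS G p q \<noteq> {}" unfolding TS_def using ends_ne by auto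

lemma TS_memI: "(a, x) \<in> ends G p \<Longrightarrow> (b, y) \<in> ends G q \<Longrightarrow> x + vdist G a b + y \<in> TS G p q"
  unfolding TS_def by (rule UnI1, rule image_eqI[of _ _ "((a,x),(b,y))"]) auto

lemma TS_memE: "z \<in> TS G p q \<Longrightarrow> (\<And>a x b y. (a, x) \<in> ends G p \<Longrightarrow> (b, y) \<in> ends G q \<Longrightarrow> z = x + vdist G a b + y \<Longrightarrow> R)
   \<Longrightarrow> (z \<in> same_edge_dist p q \<Longrightarrow> R) \<Longrightarrow> R"
  unfolding TS_def by auto

definition MV where "MV G u q = Min ((\<lambda>(b,y). vdist G u b + y) ` ends G q)"

lemma MV_le: "(b, y) \<in> ends G q \<Longrightarrow> MV G u q \<le> vdist G u b + y"
  unfolding MV_def using finite_ends by (auto intro!: Min_le)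

lemma MV_in: "\<exists>b y. (b, y) \<in> ends G q \<and> MV G u q = vdist G u b + y"
proof -
  have "MV G u q \<in> (\<lambda>(b,y). vdist G u b + y) ` ends G q"
    unfolding MV_def using finite_ends ends_ne by (intro Min_in) auto
  then show ?thesis by auto
qed

lemma tdist_Vtx: "tdist G (Vtx u) q = MV G u q"
proof -
  have "TS G (Vtx u) q = (\<lambda>(b,y). vdist G u b + y) ` ends G q"
    unfolding TS_def by (force simp: image_iff)
  then show ?thesis by (simp add: tdist_TS MV_def)
qed

lemma tdist_Pt:
  assumes "same_edge_dist (Pt e s) q = {}"
  shows "tdist G (Pt e s) q = min (s + MV G (src G e) q) (len G e - s + MV G (tgt G e) q)"
proof (rule antisym)
  obtain b y where hb: "(b, y) \<in> ends G q" "MV G (src G e) q = vdist G (src G e) b + y" using MV_in[of G q "src G e"] by blast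
  obtain b' y' where hb': "(b', y') \<in> ends G q" "MV G (tgt G e) q = vdist G (tgt G e) b' + y'" using MV_in[of G q "tgt G e"] by blast
  have m1: "s + vdist G (src G e) b + y \<in> TS G (Pt e s) q" by (rule TS_memI) (use hb in auto)
  have m2: "(len G e - s) + vdist G (tgt G e) b' + y' \<in> TS G (Pt e s) q" by (rule TS_memI) (use hb' in auto)
  have "tdist G (Pt e s) q \<le> s + MV G (src G e) q"
    using Min_le[OF finite_TS m1] hb(2) by (simp add: tdist_TS algebra_simps)
  moreover have "tdist G (Pt e s) q \<le> len G e - s + MV G (tgt G e) q"
    using Min_le[OF finite_TS m2] hb'(2) by (simp add: tdist_TS algebra_simps)
  ultimately show "tdist G (Pt e s) q \<le> min (s + MV G (src G e) q) (len G e - s + MV G (tgt G e) q)" by simp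
next
  have "Min (TS G (Pt e s) q) \<in> TS G (Pt e s) q" using finite_TS TS_ne by (rule Min_in)
  then have "min (s + MV G (src G e) q) (len G e - s + MV G (tgt G e) q) \<le> Min (TS G (Pt e s) q)"
  proof (rule TS_memE)
    fix a x b y assume "(a, x) \<in> ends G (Pt e s)" "(b, y) \<in> ends G q" "Min (TS G (Pt e s) q) = x + vdist G a b + y"
    then show ?thesis using MV_le[of b y G q a] by auto
  qed (use assms in auto)
  then show "min (s + MV G (src G e) q) (len G e - s + MV G (tgt G e) q) \<le> tdist G (Pt e s) q"
    by (simp add: tdist_TS)
qed

locale tc =
  fixes G :: "('v, 'e) tcurve"
  assumes tc: "tropical_curve G"
begin

abbreviation "V \<equiv> verts G"
abbreviation "E \<equiv> edges G"
abbreviation "L \<equiv> len G"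

lemma finV: "finite V" and finE: "finite E" and Vne: "V \<noteq> {}"
  using tc unfolding tropical_curve_def by auto
lemma srcV: "e \<in> E \<Longrightarrow> src G e \<in> V" and tgtV: "e \<in> E \<Longrightarrow> tgt G e \<in> V"
  and Lpos: "e \<in> E \<Longrightarrow> L e > 0"
  using tc unfolding tropical_curve_def by auto
lemma conn: "u \<in> V \<Longrightarrow> v \<in> V \<Longrightarrow> \<exists>es. walk G u es v"
  using tc unfolding tropical_curve_def by auto

lemma walk_len_nonneg: "walk G u es v \<Longrightarrow> walk_len G es \<ge> 0"
proof (induction es arbitrary: u)
  case Nil then show ?case by simp
next
  case (Cons x es)
  obtain e b where x: "x = (e, b)" by (cases x)
  then show ?case using Cons Lpos by (cases b) (auto intro: add_nonneg_nonneg less_imp_le)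
qed

lemma vdist_set_bdd: "bdd_below {walk_len G es | es. walk G u es v}"
  unfolding bdd_below_def using walk_len_nonneg by blast

lemma vdist_le: "walk G u es v \<Longrightarrow> vdist G u v \<le> walk_len G es"
  unfolding vdist_def using vdist_set_bdd by (intro cInf_lower) auto

lemma vdist_nonneg: "u \<in> V \<Longrightarrow> v \<in> V \<Longrightarrow> vdist G u v \<ge> 0"
  unfolding vdist_def using conn walk_len_nonneg by (intro cInf_greatest) auto

lemma vdist_refl: "v \<in> V \<Longrightarrow> vdist G v v = 0"
  using vdist_le[of v "[]" v] vdist_nonneg[of v v] by simp

lemma vdist_edge1: assumes "e \<in> E" "b \<in> V" shows "vdist G (src G e) b \<le> L e + vdist G (tgt G e) b"
proof -
  have "vdist G (src G e) b - L e \<le> vdist G (tgt G e) b"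
    unfolding vdist_def[of G "tgt G e"]
  proof (rule cInf_greatest)
    show "{walk_len G es |es. walk G (tgt G e) es b} \<noteq> {}" using conn tgtV srcV assms by auto
    fix z assume "z \<in> {walk_len G es |es. walk G (tgt G e) es b}"
    then obtain es where "walk G (tgt G e) es b" "z = walk_len G es" by auto
    then have "walk G (src G e) ((e, True) # es) b" using assms by simp
    then show "vdist G (src G e) b - L e \<le> z" using vdist_le \<open>z = _\<close> by fastforce
  qed
  then show ?thesis by simp
qed

lemma vdist_edge2: assumes "e \<in> E" "b \<in> V" shows "vdist G (tgt G e) b \<le> L e + vdist G (src G e) b"
proof -
  have "vdist G (tgt G e) b - L e \<le> vdist G (src G e) b"
    unfolding vdist_def[of G "src G e"]
  proof (rule cInf_greatest)
    show "{walk_len G es |es. walk G (src G e) es b} \<noteq> {}" using conn tgtV srcV assms by auto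
    fix z assume "z \<in> {walk_len G es |es. walk G (src G e) es b}"
    then obtain es where "walk G (src G e) es b" "z = walk_len G es" by auto
    then have "walk G (tgt G e) ((e, False) # es) b" using assms by simp
    then show "vdist G (tgt G e) b - L e \<le> z" using vdist_le \<open>z = _\<close> by fastforce
  qed
  then show ?thesis by simp
qed

definition good :: "('v,'e) point \<Rightarrow> bool" where
  "good q \<longleftrightarrow> (\<forall>(b,y)\<in>ends G q. b \<in> V \<and> y \<ge> 0)"

lemma good_points: assumes "p \<in> points G" shows "good p"
proof -
  have "(\<exists>v\<in>V. p = Vtx v) \<or> (\<exists>e t. p = Pt e t \<and> e \<in> E \<and> 0 < t \<and> t < L e)"
    using assms unfolding points_def by blast
  then show ?thesis
  proof
    assume "\<exists>v\<in>V. p = Vtx v" then show ?thesis unfolding good_def by auto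
  next
    assume "\<exists>e t. p = Pt e t \<and> e \<in> E \<and> 0 < t \<and> t < L e"
    then obtain e t where "p = Pt e t" "e \<in> E" "0 < t" "t < L e" by blast
    then show ?thesis unfolding good_def using srcV tgtV by auto
  qed
qed

lemma good_Vtx: "u \<in> V \<Longrightarrow> good (Vtx u)" unfolding good_def by auto

lemma MV_nonneg: assumes "u \<in> V" "good q" shows "MV G u q \<ge> 0"
proof -
  obtain b y where "(b, y) \<in> ends G q" "MV G u q = vdist G u b + y" using MV_in[of G q u] by blast
  moreover then have "b \<in> V" "y \<ge> 0" using assms(2) unfolding good_def by auto
  ultimately show ?thesis using vdist_nonneg[OF assms(1)] by fastforce
qed

lemma tdist_nonneg: assumes "good p" "good q" shows "tdist G p q \<ge> 0"
proof -
  have "Min (TS G p q) \<in> TS G p q" using finite_TS TS_ne by (rule Min_in)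
  then have "Min (TS G p q) \<ge> 0"
  proof (rule TS_memE)
    fix a x b y assume "(a, x) \<in> ends G p" "(b, y) \<in> ends G q" "Min (TS G p q) = x + vdist G a b + y"
    moreover then have "a \<in> V" "x \<ge> 0" "b \<in> V" "y \<ge> 0" using assms unfolding good_def by auto
    ultimately show ?thesis using vdist_nonneg[of a b] by simp
  next
    assume "Min (TS G p q) \<in> same_edge_dist p q"
    then show ?thesis by (rule sed_nonneg)
  qed
  then show ?thesis by (simp add: tdist_TS)
qed

lemma tdist_self: assumes "good p" shows "tdist G p p = 0"
proof -
  have "0 \<in> TS G p p"
  proof (cases p)
    case (Vtx v)
    then have "v \<in> V" using assms unfolding good_def by auto
    then show ?thesis using TS_memI[of v 0 G p v 0 p] Vtx vdist_refl by auto
  next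
    case (Pt e t) then show ?thesis unfolding TS_def by auto
  qed
  then have "tdist G p p \<le> 0" unfolding tdist_TS by (rule Min_le[OF finite_TS])
  moreover have "tdist G p p \<ge> 0" using tdist_nonneg assms by blast
  ultimately show ?thesis by linarith
qed

end

lemma Inf_min_lemma:
  fixes F Gf :: "'a \<Rightarrow> real"
  assumes "A \<noteq> {}" "\<And>q. q \<in> A \<Longrightarrow> F q \<ge> 0" "\<And>q. q \<in> A \<Longrightarrow> Gf q \<ge> 0"
  shows "Inf ((\<lambda>q. min (c + F q) (d + Gf q)) ` A) = min (c + Inf (F ` A)) (d + Inf (Gf ` A))"
proof -
  have bF: "bdd_below (F ` A)" using assms(2) unfolding bdd_below_def by (intro exI[of _ 0]) auto
  have bG: "bdd_below (Gf ` A)" using assms(3) unfolding bdd_below_def by (intro exI[of _ 0]) auto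
  let ?h = "\<lambda>q. min (c + F q) (d + Gf q)"
  have bH: "bdd_below (?h ` A)"
    unfolding bdd_below_def
  proof (intro exI[of _ "min c d"] ballI)
    fix z assume "z \<in> ?h ` A" then obtain q where "q\<in>A" "z = ?h q" by auto
    then show "min c d \<le> z" using assms(2)[of q] assms(3)[of q] by (simp add: min_def)
  qed
  have 1: "Inf (?h ` A) - c \<le> Inf (F ` A)"
    using assms(1) proof (rule cINF_greatest)
    fix q assume "q \<in> A"
    then have "Inf (?h ` A) \<le> ?h q" by (rule cINF_lower[OF bH])
    then show "Inf (?h ` A) - c \<le> F q" by linarith
  qed
  have 2: "Inf (?h ` A) - d \<le> Inf (Gf ` A)"
    using assms(1) proof (rule cINF_greatest)
    fix q assume "q \<in> A"
    then have "Inf (?h ` A) \<le> ?h q" by (rule cINF_lower[OF bH])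
    then show "Inf (?h ` A) - d \<le> Gf q" by linarith
  qed
  have 3: "min (c + Inf (F ` A)) (d + Inf (Gf ` A)) \<le> Inf (?h ` A)"
    using assms(1) proof (rule cINF_greatest)
    fix q assume "q \<in> A"
    then have "Inf (F ` A) \<le> F q" "Inf (Gf ` A) \<le> Gf q" using cINF_lower bF bG by auto
    then show "min (c + Inf (F ` A)) (d + Inf (Gf ` A)) \<le> ?h q" by linarith
  qed
  show ?thesis using 1 2 3 by linarith
qed

locale pwc = tc +
  fixes P and W
  assumes even: "even_subgraph G P" and WV: "W \<subseteq> verts G" and ne: "P \<noteq> {} \<or> W \<noteq> {}"
begin

abbreviation "Gm \<equiv> GammaPW G P W"
abbreviation "d \<equiv> dPW G P W"

definition dv where "dv u = dPW G P W (Vtx u)"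

lemma PE: "P \<subseteq> E" using even unfolding even_subgraph_def by auto

lemma Gm_cases: assumes "q \<in> Gm"
  obtains (W) w where "q = Vtx w" "w \<in> W" | (S) e where "q = Vtx (src G e)" "e \<in> P"
  | (T) e where "q = Vtx (tgt G e)" "e \<in> P" | (I) e t where "q = Pt e t" "e \<in> P" "0 < t" "t < L e"
  using assms unfolding GammaPW_def by blast

lemma Gm_good: assumes "q \<in> Gm" shows "good q"
  using assms
proof (cases rule: Gm_cases)
  case (W w) then show ?thesis using WV good_Vtx by auto
next
  case (S e) then show ?thesis using PE srcV good_Vtx by auto
next
  case (T e) then show ?thesis using PE tgtV good_Vtx by auto
next
  case (I e t) then show ?thesis using PE srcV tgtV unfolding good_def by auto
qed

lemma Gm_ne: "Gm \<noteq> {}"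
  using ne unfolding GammaPW_def by blast

lemma Gm_bdd: "good p \<Longrightarrow> bdd_below (tdist G p ` Gm)"
  unfolding bdd_below_def using Gm_good tdist_nonneg by blast

lemma d_nonneg: "good p \<Longrightarrow> d p \<ge> 0"
  unfolding dPW_def using Gm_ne Gm_good tdist_nonneg by (intro cINF_greatest) auto

lemma d_in: assumes "p \<in> Gm" shows "d p = 0"
proof -
  have g: "good p" using Gm_good assms by blast
  have "d p \<le> tdist G p p" unfolding dPW_def using Gm_bdd[OF g] assms by (rule cINF_lower)
  then show ?thesis using tdist_self[OF g] d_nonneg[OF g] by linarith
qed

lemma dv_Inf: "dv u = Inf (MV G u ` Gm)"
  unfolding dv_def dPW_def tdist_Vtx by simp

lemma MV_bdd: "u \<in> V \<Longrightarrow> bdd_below (MV G u ` Gm)"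
  unfolding bdd_below_def using Gm_good MV_nonneg by blast

lemma dv_P: "e \<in> P \<Longrightarrow> dv (src G e) = 0 \<and> dv (tgt G e) = 0"
  unfolding dv_def by (intro conjI d_in) (auto simp: GammaPW_def)

lemma dv_W: "w \<in> W \<Longrightarrow> dv w = 0"
  unfolding dv_def by (intro d_in) (auto simp: GammaPW_def)

lemma dv_nonneg: "u \<in> V \<Longrightarrow> dv u \<ge> 0"
  unfolding dv_def using good_Vtx d_nonneg by blast

lemma d_P: assumes "e \<in> P" "0 < s" "s < L e" shows "d (Pt e s) = 0"
  using assms by (intro d_in) (auto simp: GammaPW_def)

lemma d_Pt: assumes "e \<in> E" "e \<notin> P" "0 < s" "s < L e"
  shows "d (Pt e s) = min (s + dv (src G e)) (L e - s + dv (tgt G e))"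
proof -
  have sed0: "\<And>q. q \<in> Gm \<Longrightarrow> same_edge_dist (Pt e s) q = {}"
  proof -
    fix q assume "q \<in> Gm"
    then show "same_edge_dist (Pt e s) q = {}"
    proof (cases rule: Gm_cases)
      case (I e' t) then show ?thesis using assms(2) by auto
    qed auto
  qed
  then have "tdist G (Pt e s) ` Gm = (\<lambda>q. min (s + MV G (src G e) q) (L e - s + MV G (tgt G e) q)) ` Gm"
  proof (intro image_cong refl)
    fix q assume "q \<in> Gm" show "tdist G (Pt e s) q = min (s + MV G (src G e) q) (L e - s + MV G (tgt G e) q)"
      by (rule tdist_Pt[OF sed0[OF \<open>q \<in> Gm\<close>]])
  qed
  then have "d (Pt e s) = Inf ((\<lambda>q. min (s + MV G (src G e) q) (L e - s + MV G (tgt G e) q)) ` Gm)"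
    unfolding dPW_def by simp
  also have "\<dots> = min (s + Inf (MV G (src G e) ` Gm)) (L e - s + Inf (MV G (tgt G e) ` Gm))"
    using Gm_ne by (rule Inf_min_lemma) (use MV_nonneg Gm_good srcV tgtV assms(1) in auto)
  finally show ?thesis by (simp add: dv_Inf)
qed

lemma MV_edge1: assumes "e \<in> E" "good q" shows "MV G (src G e) q \<le> L e + MV G (tgt G e) q"
proof -
  obtain b y where b: "(b, y) \<in> ends G q" "MV G (tgt G e) q = vdist G (tgt G e) b + y" using MV_in[of G q "tgt G e"] by blast
  then have "b \<in> V" using assms unfolding good_def by auto
  then show ?thesis using MV_le[OF b(1), of "src G e"] vdist_edge1[OF assms(1)] b by fastforce
qed

lemma MV_edge2: assumes "e \<in> E" "good q" shows "MV G (tgt G e) q \<le> L e + MV G (src G e) q"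
proof -
  obtain b y where b: "(b, y) \<in> ends G q" "MV G (src G e) q = vdist G (src G e) b + y" using MV_in[of G q "src G e"] by blast
  then have "b \<in> V" using assms unfolding good_def by auto
  then show ?thesis using MV_le[OF b(1), of "tgt G e"] vdist_edge2[OF assms(1)] b by fastforce
qed

lemma dv_edge: assumes "e \<in> E"
  shows "dv (src G e) \<le> L e + dv (tgt G e)" "dv (tgt G e) \<le> L e + dv (src G e)"
proof -
  have "dv (src G e) - L e \<le> dv (tgt G e)" unfolding dv_Inf
    using Gm_ne proof (rule cINF_greatest)
    fix q assume q: "q \<in> Gm"
    have "Inf (MV G (src G e) ` Gm) \<le> MV G (src G e) q" using MV_bdd srcV assms q by (intro cINF_lower) auto
    then show "Inf (MV G (src G e) ` Gm) - L e \<le> MV G (tgt G e) q" using MV_edge1[OF assms Gm_good[OF q]] by linarith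
  qed
  then show "dv (src G e) \<le> L e + dv (tgt G e)" by simp
  have "dv (tgt G e) - L e \<le> dv (src G e)" unfolding dv_Inf
    using Gm_ne proof (rule cINF_greatest)
    fix q assume q: "q \<in> Gm"
    have "Inf (MV G (tgt G e) ` Gm) \<le> MV G (tgt G e) q" using MV_bdd tgtV assms q by (intro cINF_lower) auto
    then show "Inf (MV G (tgt G e) ` Gm) - L e \<le> MV G (src G e) q" using MV_edge2[OF assms Gm_good[OF q]] by linarith
  qed
  then show "dv (tgt G e) \<le> L e + dv (src G e)" by simp
qed

definition phi where
  "phi e s = (if e \<in> P then 0 else min (s + dv (src G e)) (L e - s + dv (tgt G e)))"

lemma H_phi: assumes "e \<in> E" "0 \<le> s" "s \<le> L e" shows "d (at_param G e s) = phi e s"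
proof -
  have Lp: "L e > 0" using Lpos assms by auto
  consider "s = 0" | "s = L e" | "0 < s" "s < L e" using assms by linarith
  then show ?thesis
  proof cases
    case 1 then show ?thesis using dv_P[of e] dv_edge[OF assms(1)]
      by (auto simp: at_param_def phi_def dv_def[symmetric] min_def)
  next
    case 2 then show ?thesis using dv_P[of e] dv_edge[OF assms(1)] Lp
      by (auto simp: at_param_def phi_def dv_def[symmetric] min_def)
  next
    case 3 then show ?thesis using d_P d_Pt assms(1)
      by (auto simp: at_param_def phi_def)
  qed
qed

definition kk where "kk e = (L e + dv (tgt G e) - dv (src G e)) / 2"

lemma kk_range: "e \<in> E \<Longrightarrow> 0 \<le> kk e \<and> kk e \<le> L e"
  using dv_edge[of e] unfolding kk_def by auto

lemma phi_lo: "e \<notin> P \<Longrightarrow> s \<le> kk e \<Longrightarrow> phi e s = s + dv (src G e)"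
  unfolding phi_def kk_def by (auto simp: min_def)

lemma phi_hi: "e \<notin> P \<Longrightarrow> kk e \<le> s \<Longrightarrow> phi e s = L e - s + dv (tgt G e)"
  unfolding phi_def kk_def by (auto simp: min_def)

lemma is_crit_iff: assumes "e \<in> E"
  shows "is_crit G P W e t \<longleftrightarrow> (e \<notin> P \<and> 0 < kk e \<and> kk e < L e \<and> t = kk e)"
proof
  assume c: "is_crit G P W e t"
  then have t: "0 < t" "t < L e" and nl: "nonlinear_at (\<lambda>s. d (at_param G e s)) t"
    unfolding is_crit_def by auto
  have loc: "\<And>s. \<bar>s - t\<bar> < min t (L e - t) \<Longrightarrow> d (at_param G e s) = phi e s"
    using H_phi[OF assms] t by auto
  have "e \<notin> P"
  proof
    assume "e \<in> P"
    have "\<forall>s. \<bar>s - t\<bar> < min t (L e - t) \<longrightarrow> d (at_param G e s) = 0 * s + 0"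
      using loc \<open>e \<in> P\<close> by (auto simp: phi_def)
    moreover have "min t (L e - t) > 0" using t by auto
    ultimately show False using nl unfolding nonlinear_at_def by blast
  qed
  moreover have "t = kk e"
  proof (rule ccontr)
    assume "t \<noteq> kk e"
    then consider "t < kk e" | "t > kk e" by linarith
    then show False
    proof cases
      case 1
      have "\<forall>s. \<bar>s - t\<bar> < min (min t (L e - t)) (kk e - t) \<longrightarrow> d (at_param G e s) = 1 * s + dv (src G e)"
        using loc phi_lo[OF \<open>e \<notin> P\<close>] by auto
      moreover have "min (min t (L e - t)) (kk e - t) > 0" using t 1 by auto
      ultimately show False using nl unfolding nonlinear_at_def by blast
    next
      case 2
      have "\<forall>s. \<bar>s - t\<bar> < min (min t (L e - t)) (t - kk e) \<longrightarrow> d (at_param G e s) = (-1) * s + (L e + dv (tgt G e))"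
        using loc phi_hi[OF \<open>e \<notin> P\<close>] by auto
      moreover have "min (min t (L e - t)) (t - kk e) > 0" using t 2 by auto
      ultimately show False using nl unfolding nonlinear_at_def by blast
    qed
  qed
  ultimately show "e \<notin> P \<and> 0 < kk e \<and> kk e < L e \<and> t = kk e" using t by auto
next
  assume h: "e \<notin> P \<and> 0 < kk e \<and> kk e < L e \<and> t = kk e"
  have "nonlinear_at (\<lambda>s. d (at_param G e s)) t" unfolding nonlinear_at_def
  proof
    assume "\<exists>a b \<epsilon>. \<epsilon> > 0 \<and> (\<forall>s. \<bar>s - t\<bar> < \<epsilon> \<longrightarrow> d (at_param G e s) = a * s + b)"
    then obtain a b \<epsilon> where eps: "\<epsilon> > 0" "\<forall>s. \<bar>s - t\<bar> < \<epsilon> \<longrightarrow> d (at_param G e s) = a * s + b" by blast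
    define \<delta> where "\<delta> = min \<epsilon> (min t (L e - t)) / 2"
    have dp: "\<delta> > 0" "\<delta> < \<epsilon>" "\<delta> < t" "\<delta> < L e - t" using eps h unfolding \<delta>_def by auto
    have e1: "d (at_param G e (t - \<delta>)) = a * (t - \<delta>) + b" using eps dp by auto
    have e2: "d (at_param G e t) = a * t + b" using eps dp by auto
    have e3: "d (at_param G e (t + \<delta>)) = a * (t + \<delta>) + b" using eps dp by auto
    have p1: "d (at_param G e (t - \<delta>)) = t - \<delta> + dv (src G e)"
      using H_phi[OF assms, of "t - \<delta>"] phi_lo[of e "t - \<delta>"] h dp by auto
    have p2: "d (at_param G e t) = t + dv (src G e)"
      using H_phi[OF assms, of t] phi_lo[of e t] h by auto
    have p3: "d (at_param G e (t + \<delta>)) = L e - (t + \<delta>) + dv (tgt G e)"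
      using H_phi[OF assms, of "t + \<delta>"] phi_hi[of e "t + \<delta>"] h dp by auto
    have "2 * t = L e + dv (tgt G e) - dv (src G e)" using h unfolding kk_def by auto
    then show False using e1 e2 e3 p1 p2 p3 dp(1) by (simp add: algebra_simps)
  qed
  then show "is_crit G P W e t" unfolding is_crit_def using h by auto
qed

lemma has_crit_iff: "e \<in> E \<Longrightarrow> has_crit G P W e \<longleftrightarrow> (e \<notin> P \<and> 0 < kk e \<and> kk e < L e)"
  unfolding has_crit_def using is_crit_iff by auto

lemma crit_pt_eq: "e \<in> E \<Longrightarrow> has_crit G P W e \<Longrightarrow> crit_pt G P W e = Pt e (kk e)"
  unfolding crit_pt_def using is_crit_iff has_crit_iff by (metis (no_types, lifting) someI_ex)

end

lemma RA_of: "(\<forall>s\<in>{a..b}. g s = m * s + c) \<Longrightarrow> a \<le> t \<Longrightarrow> t < b \<Longrightarrow> RA g t m"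
  unfolding RA_def by (intro exI[of _ "b - t"] conjI exI[of _ c]) auto

lemma LA_of: "(\<forall>s\<in>{a..b}. g s = m * s + c) \<Longrightarrow> a < t \<Longrightarrow> t \<le> b \<Longrightarrow> LA g t m"
  unfolding LA_def by (intro exI[of _ "t - a"] conjI exI[of _ c]) auto

definition ind :: "bool \<Rightarrow> int" where "ind b = (if b then 1 else 0)"

lemma card_filter_ind: "finite A \<Longrightarrow> int (card {x \<in> A. Q x}) = (\<Sum>x\<in>A. ind (Q x))"
proof -
  assume f: "finite A"
  have "int (card {x \<in> A. Q x}) = (\<Sum>x\<in>{x \<in> A. Q x}. 1)" by simp
  also have "\<dots> = (\<Sum>x\<in>A. if Q x then 1 else 0)" using f by (rule sum.inter_filter)
  finally show ?thesis by (simp add: ind_def)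
qed

lemma sum_filter_if: "finite A \<Longrightarrow> (\<Sum>x\<in>{x \<in> A. Q x}. g x) = (\<Sum>x\<in>A. if Q x then g x else 0)"
  by (rule sum.inter_filter)

context tc begin

definition SR where "SR F \<longleftrightarrow> (\<forall>e\<in>E. pwi UNIV (\<lambda>s. F (at_param G e s)) 0 (L e))"

lemma SR_lin: assumes "SR F1" "SR F2" shows "SR (\<lambda>q. c1 * F1 q + c2 * F2 q)"
  unfolding SR_def
proof
  fix e assume e: "e \<in> E"
  have "pwi ((*) c1 ` UNIV) (\<lambda>s. c1 * F1 (at_param G e s)) 0 (L e)"
    using assms(1) e unfolding SR_def by (intro pwi_scale) auto
  moreover have "pwi ((*) c2 ` UNIV) (\<lambda>s. c2 * F2 (at_param G e s)) 0 (L e)"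
    using assms(2) e unfolding SR_def by (intro pwi_scale) auto
  ultimately have "pwi (sumset ((*) c1 ` UNIV) ((*) c2 ` UNIV)) (\<lambda>s. c1 * F1 (at_param G e s) + c2 * F2 (at_param G e s)) 0 (L e)"
    by (rule pwi_add)
  then show "pwi UNIV (\<lambda>s. c1 * F1 (at_param G e s) + c2 * F2 (at_param G e s)) 0 (L e)"
    by (rule pwi_mono) auto
qed

lemma SR_RA: "SR F \<Longrightarrow> e \<in> E \<Longrightarrow> 0 \<le> t \<Longrightarrow> t < L e \<Longrightarrow> \<exists>m. RA (\<lambda>s. F (at_param G e s)) t m"
  unfolding SR_def using pwi_RA by blast

lemma SR_LA: "SR F \<Longrightarrow> e \<in> E \<Longrightarrow> 0 < t \<Longrightarrow> t \<le> L e \<Longrightarrow> \<exists>m. LA (\<lambda>s. F (at_param G e s)) t m"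
  unfolding SR_def using pwi_LA by blast

lemma rslope_lin: assumes "SR F1" "SR F2" "e \<in> E" "0 \<le> t" "t < L e"
  shows "rslope (\<lambda>s. c1 * F1 (at_param G e s) + c2 * F2 (at_param G e s)) t
       = c1 * rslope (\<lambda>s. F1 (at_param G e s)) t + c2 * rslope (\<lambda>s. F2 (at_param G e s)) t"
proof -
  obtain m1 where 1: "RA (\<lambda>s. F1 (at_param G e s)) t m1" using SR_RA assms by blast
  obtain m2 where 2: "RA (\<lambda>s. F2 (at_param G e s)) t m2" using SR_RA assms by blast
  show ?thesis using RA_lin[OF 1 2, of c1 c2] RA_rslope 1 2 by metis
qed

lemma lslope_lin: assumes "SR F1" "SR F2" "e \<in> E" "0 < t" "t \<le> L e"
  shows "lslope (\<lambda>s. c1 * F1 (at_param G e s) + c2 * F2 (at_param G e s)) t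
       = c1 * lslope (\<lambda>s. F1 (at_param G e s)) t + c2 * lslope (\<lambda>s. F2 (at_param G e s)) t"
proof -
  obtain m1 where 1: "LA (\<lambda>s. F1 (at_param G e s)) t m1" using SR_LA assms by blast
  obtain m2 where 2: "LA (\<lambda>s. F2 (at_param G e s)) t m2" using SR_LA assms by blast
  show ?thesis using LA_lin[OF 1 2, of c1 c2] LA_lslope 1 2 by metis
qed

lemma points_Pt: "Pt e t \<in> points G \<longleftrightarrow> e \<in> E \<and> 0 < t \<and> t < L e"
  unfolding points_def by auto

lemma points_Vtx: "Vtx v \<in> points G \<longleftrightarrow> v \<in> V"
  unfolding points_def by auto

lemma ord_lin: assumes "SR F1" "SR F2" "p \<in> points G"
  shows "ord_at G (\<lambda>q. c1 * F1 q + c2 * F2 q) p = c1 * ord_at G F1 p + c2 * ord_at G F2 p"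
proof (cases p)
  case (Vtx v)
  have r: "\<And>e. e \<in> {e \<in> E. src G e = v} \<Longrightarrow> rslope (\<lambda>s. c1 * F1 (at_param G e s) + c2 * F2 (at_param G e s)) 0
       = c1 * rslope (\<lambda>s. F1 (at_param G e s)) 0 + c2 * rslope (\<lambda>s. F2 (at_param G e s)) 0"
    using rslope_lin[OF assms(1,2)] Lpos by auto
  have l: "\<And>e. e \<in> {e \<in> E. tgt G e = v} \<Longrightarrow> - lslope (\<lambda>s. c1 * F1 (at_param G e s) + c2 * F2 (at_param G e s)) (L e)
       = c1 * (- lslope (\<lambda>s. F1 (at_param G e s)) (L e)) + c2 * (- lslope (\<lambda>s. F2 (at_param G e s)) (L e))"
    using lslope_lin[OF assms(1,2)] Lpos by auto
  show ?thesis unfolding Vtx ord_at.simps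
    by (simp only: sum.cong[OF refl r] sum.cong[OF refl l] sum.distrib sum_distrib_left[symmetric] algebra_simps)
next
  case (Pt e t)
  then have "e \<in> E" "0 < t" "t < L e" using assms(3) points_Pt by auto
  then show ?thesis unfolding Pt ord_at.simps
    using rslope_lin[OF assms(1,2), of e t c1 c2] lslope_lin[OF assms(1,2), of e t c1 c2]
    by (simp add: algebra_simps)
qed

end

context pwc begin

lemma H_P: "e \<in> E \<Longrightarrow> e \<in> P \<Longrightarrow> \<forall>s\<in>{0..L e}. d (at_param G e s) = 0 * s + 0"
  using H_phi by (auto simp: phi_def)

lemma H_lo: "e \<in> E \<Longrightarrow> e \<notin> P \<Longrightarrow> \<forall>s\<in>{0..kk e}. d (at_param G e s) = 1 * s + dv (src G e)"
  using H_phi phi_lo kk_range by force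

lemma H_hi: "e \<in> E \<Longrightarrow> e \<notin> P \<Longrightarrow> \<forall>s\<in>{kk e..L e}. d (at_param G e s) = (-1) * s + (L e + dv (tgt G e))"
  using H_phi phi_hi kk_range by force

definition sig where "sig e = (if e \<in> P then {0} else {-1, 1::real})"

lemma Hd_pwi: assumes "e \<in> E" shows "pwi (sig e) (\<lambda>s. d (at_param G e s)) 0 (L e)"
proof (cases "e \<in> P")
  case True
  then show ?thesis using H_P[OF assms True] Lpos[OF assms]
    by (intro pwi.base) (auto simp: aff_def sig_def)
next
  case False
  note k = kk_range[OF assms]
  consider "kk e = 0" | "kk e = L e" | "0 < kk e" "kk e < L e" using k by linarith
  then show ?thesis
  proof cases
    case 1
    have "aff (sig e) (\<lambda>s. d (at_param G e s)) 0 (L e)"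
      unfolding aff_def sig_def using H_hi[OF assms False] False 1
      by (intro bexI[of _ "-1"] exI[of _ "L e + dv (tgt G e)"]) auto
    then show ?thesis using Lpos[OF assms] by (intro pwi.base)
  next
    case 2
    have "aff (sig e) (\<lambda>s. d (at_param G e s)) 0 (L e)"
      unfolding aff_def sig_def using H_lo[OF assms False] False 2
      by (intro bexI[of _ "1"] exI[of _ "dv (src G e)"]) auto
    then show ?thesis using Lpos[OF assms] by (intro pwi.base)
  next
    case 3
    have a1: "aff (sig e) (\<lambda>s. d (at_param G e s)) 0 (kk e)"
      using H_lo[OF assms False] False unfolding aff_def sig_def by force
    have a2: "aff (sig e) (\<lambda>s. d (at_param G e s)) (kk e) (L e)"
      using H_hi[OF assms False] False unfolding aff_def sig_def by force
    show ?thesis using 3 a1 a2 by (intro pwi.step[of 0 "kk e"] pwi.base) auto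
  qed
qed

lemma SR_d: "SR d"
  unfolding SR_def using Hd_pwi by (blast intro: pwi_mono)

definition rsI where "rsI e = (if e \<in> P then 0 else if 0 < kk e then 1 else (-1::int))"
definition lsI where "lsI e = (if e \<in> P then 0 else if kk e < L e then -1 else (1::int))"

lemma rs_d: assumes "e \<in> E" shows "rslope (\<lambda>s. d (at_param G e s)) 0 = of_int (rsI e)"
proof -
  note k = kk_range[OF assms] and Lp = Lpos[OF assms]
  have "RA (\<lambda>s. d (at_param G e s)) 0 (of_int (rsI e))"
  proof (cases "e \<in> P")
    case True then show ?thesis using RA_of[OF H_P[OF assms True]] Lp by (simp add: rsI_def)
  next
    case False
    show ?thesis
    proof (cases "0 < kk e")
      case True then show ?thesis using RA_of[OF H_lo[OF assms False]] False by (simp add: rsI_def)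
    next
      case F2: False
      then have "kk e = 0" using k by linarith
      then show ?thesis using RA_of[OF H_hi[OF assms False], of 0] False F2 Lp by (simp add: rsI_def)
    qed
  qed
  then show ?thesis by (rule RA_rslope)
qed

lemma ls_d: assumes "e \<in> E" shows "lslope (\<lambda>s. d (at_param G e s)) (L e) = of_int (lsI e)"
proof -
  note k = kk_range[OF assms] and Lp = Lpos[OF assms]
  have "LA (\<lambda>s. d (at_param G e s)) (L e) (of_int (lsI e))"
  proof (cases "e \<in> P")
    case True then show ?thesis using LA_of[OF H_P[OF assms True]] Lp by (simp add: lsI_def)
  next
    case False
    show ?thesis
    proof (cases "kk e < L e")
      case True then show ?thesis using LA_of[OF H_hi[OF assms False]] False by (simp add: lsI_def)
    next
      case F2: False
      then have "kk e = L e" using k by linarith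
      then show ?thesis using LA_of[OF H_lo[OF assms False], of "L e"] False F2 Lp by (simp add: lsI_def)
    qed
  qed
  then show ?thesis by (rule LA_lslope)
qed

lemma ord_d_Pt: assumes "e \<in> E" "0 < t" "t < L e"
  shows "ord_at G d (Pt e t) = (if e \<notin> P \<and> t = kk e then -2 else 0)"
proof -
  note k = kk_range[OF assms(1)]
  let ?g = "\<lambda>s. d (at_param G e s)"
  have "rslope ?g t - lslope ?g t = (if e \<notin> P \<and> t = kk e then -2 else 0)"
  proof (cases "e \<in> P")
    case True
    then show ?thesis using RA_rslope[OF RA_of[OF H_P[OF assms(1) True]]] LA_lslope[OF LA_of[OF H_P[OF assms(1) True]]] assms by simp
  next
    case False
    consider "t < kk e" | "t = kk e" | "kk e < t" by linarith
    then show ?thesis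
    proof cases
      case 1 then show ?thesis using RA_rslope[OF RA_of[OF H_lo[OF assms(1) False]]] LA_lslope[OF LA_of[OF H_lo[OF assms(1) False]]] assms by simp
    next
      case 2 then show ?thesis using RA_rslope[OF RA_of[OF H_hi[OF assms(1) False]]] LA_lslope[OF LA_of[OF H_lo[OF assms(1) False]]] assms False by simp
    next
      case 3 then show ?thesis using RA_rslope[OF RA_of[OF H_hi[OF assms(1) False]]] LA_lslope[OF LA_of[OF H_hi[OF assms(1) False]]] assms by simp
    qed
  qed
  then show ?thesis by simp
qed

lemma ord_d_Vtx: assumes "v \<in> V"
  shows "ord_at G d (Vtx v) = of_int (\<Sum>e\<in>E. ind (src G e = v) * rsI e - ind (tgt G e = v) * lsI e)"
proof -
  have "ord_at G d (Vtx v) = (\<Sum>e\<in>{e \<in> E. src G e = v}. of_int (rsI e)) + (\<Sum>e\<in>{e \<in> E. tgt G e = v}. - of_int (lsI e))"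
    unfolding ord_at.simps using rs_d ls_d by (intro arg_cong2[where f="(+)"] sum.cong) auto
  also have "\<dots> = (\<Sum>e\<in>E. if src G e = v then of_int (rsI e) else 0) + (\<Sum>e\<in>E. if tgt G e = v then - of_int (lsI e) else 0)"
    using finE by (simp add: sum_filter_if)
  also have "\<dots> = (\<Sum>e\<in>E. of_int (ind (src G e = v) * rsI e - ind (tgt G e = v) * lsI e))"
    unfolding sum.distrib[symmetric] by (intro sum.cong) (auto simp: ind_def)
  finally show ?thesis by simp
qed

end

context pwc begin

abbreviation "hc e \<equiv> has_crit G P W e"

lemma sub_edges_iff: "x \<in> sub_edges G P W \<longleftrightarrow>
   (\<exists>e. x = (e, Whole) \<and> e \<in> E \<and> \<not> hc e) \<or> (\<exists>e pc. x = (e, pc) \<and> e \<in> E \<and> hc e \<and> pc \<noteq> Whole)"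
  unfolding sub_edges_def by auto

lemma d_kk: assumes "e \<in> E" "hc e"
  shows "d (Pt e (kk e)) = kk e + dv (src G e)" "d (Pt e (kk e)) = L e - kk e + dv (tgt G e)"
proof -
  have h: "e \<notin> P" "0 < kk e" "kk e < L e" using has_crit_iff assms by auto
  have "d (Pt e (kk e)) = phi e (kk e)" using d_Pt[OF assms(1) h] h(1) by (simp add: phi_def)
  then have 1: "d (Pt e (kk e)) = kk e + dv (src G e)" using phi_lo[OF h(1), of "kk e"] by simp
  then show "d (Pt e (kk e)) = kk e + dv (src G e)" .
  show "d (Pt e (kk e)) = L e - kk e + dv (tgt G e)" using 1 unfolding kk_def by (simp add: field_simps)
qed

lemma st_Lo: assumes "e \<in> E" "hc e" shows "sub_target G P W ori (e, Lo) = Pt e (kk e)"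
proof -
  have h: "e \<notin> P" "0 < kk e" "kk e < L e" using has_crit_iff assms by auto
  show ?thesis unfolding sub_target_def using h d_kk[OF assms] crit_pt_eq[OF assms]
    by (simp add: dv_def[symmetric])
qed

lemma st_Hi: assumes "e \<in> E" "hc e" shows "sub_target G P W ori (e, Hi) = Pt e (kk e)"
proof -
  have h: "e \<notin> P" "0 < kk e" "kk e < L e" using has_crit_iff assms by auto
  show ?thesis unfolding sub_target_def using h d_kk[OF assms] crit_pt_eq[OF assms]
    by (simp add: dv_def[symmetric])
qed

lemma st_Whole: assumes "e \<in> E" "\<not> hc e"
  shows "sub_target G P W ori (e, Whole) = (if e \<in> P then Vtx (head G ori e) else if kk e = 0 then Vtx (src G e) else Vtx (tgt G e))"
proof (cases "e \<in> P")
  case True then show ?thesis unfolding sub_target_def head_def by simp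
next
  case False
  have k: "kk e = 0 \<or> kk e = L e" using has_crit_iff[OF assms(1)] assms(2) False kk_range[OF assms(1)] by auto
  have Lp: "L e > 0" using Lpos assms by auto
  show ?thesis
  proof (cases "kk e = 0")
    case True
    then have "dv (src G e) = L e + dv (tgt G e)" unfolding kk_def by simp
    then show ?thesis unfolding sub_target_def using False True Lp by (simp add: dv_def[symmetric])
  next
    case F2: False
    then have "kk e = L e" using k by simp
    then have "dv (tgt G e) = L e + dv (src G e)" unfolding kk_def by simp
    then show ?thesis unfolding sub_target_def using False F2 Lp by (simp add: dv_def[symmetric])
  qed
qed

lemma st_Vtx_Whole: assumes "x \<in> sub_edges G P W" "sub_target G P W ori x = Vtx v"
  shows "\<exists>e. x = (e, Whole) \<and> e \<in> E \<and> \<not> hc e"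
proof -
  from assms(1) consider (W) "\<exists>e. x = (e, Whole) \<and> e \<in> E \<and> \<not> hc e" | (C) e pc where "x = (e, pc)" "e \<in> E" "hc e" "pc \<noteq> Whole"
    unfolding sub_edges_iff by blast
  then show ?thesis
  proof cases
    case C then show ?thesis using assms(2) st_Lo[OF C(2,3)] st_Hi[OF C(2,3)] by (cases pc) auto
  qed blast
qed

lemma D_Pt: assumes "e \<in> E" "0 < t" "t < L e"
  shows "D_PW G P W ori (Pt e t) = (if e \<notin> P \<and> t = kk e then 1 else 0)"
proof -
  have pt: "Pt e t \<in> points G" using assms points_Pt by auto
  show ?thesis
  proof (cases "e \<notin> P \<and> t = kk e")
    case True
    then have hc: "hc e" using has_crit_iff[OF assms(1)] assms by auto
    have sv: "Pt e t \<in> sub_verts G P W" unfolding sub_verts_def using crit_pt_eq[OF assms(1) hc] True assms hc by auto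
    have "{x \<in> sub_edges G P W. sub_target G P W ori x = Pt e t} = {(e, Lo), (e, Hi)}"
    proof (intro equalityI subsetI)
      fix x assume "x \<in> {x \<in> sub_edges G P W. sub_target G P W ori x = Pt e t}"
      then have x: "x \<in> sub_edges G P W" "sub_target G P W ori x = Pt e t" by auto
      from x(1) consider (W) e' where "x = (e', Whole)" "e' \<in> E" "\<not> hc e'" | (C) e' pc where "x = (e', pc)" "e' \<in> E" "hc e'" "pc \<noteq> Whole"
        unfolding sub_edges_iff by blast
      then show "x \<in> {(e, Lo), (e, Hi)}"
      proof cases
        case W then show ?thesis using x(2) st_Whole[OF W(2,3)] W(1) by (auto split: if_splits)
      next
        case C then show ?thesis using x(2) st_Lo[OF C(2,3)] st_Hi[OF C(2,3)] C(1) by (cases pc) auto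
      qed
    next
      fix x assume "x \<in> {(e, Lo), (e, Hi)}"
      then show "x \<in> {x \<in> sub_edges G P W. sub_target G P W ori x = Pt e t}"
        using st_Lo[OF assms(1) hc] st_Hi[OF assms(1) hc] True assms(1) hc unfolding sub_edges_iff by auto
    qed
    then have "indeg G P W ori (Pt e t) = 2" unfolding indeg_def using sv by simp
    then show ?thesis unfolding D_PW_def wext_def using pt True by simp
  next
    case False
    have "Pt e t \<notin> sub_verts G P W"
    proof
      assume "Pt e t \<in> sub_verts G P W"
      then obtain e' where "e' \<in> E" "hc e'" "crit_pt G P W e' = Pt e t" unfolding sub_verts_def by auto
      then show False using crit_pt_eq has_crit_iff False by auto
    qed
    then have "indeg G P W ori (Pt e t) = 1" unfolding indeg_def by simp
    then show ?thesis unfolding D_PW_def wext_def using pt False by simp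
  qed
qed

definition tw where "tw ori e = sub_target G P W ori (e, Whole)"

lemma D_Vtx: assumes "v \<in> V"
  shows "D_PW G P W ori (Vtx v) = (\<Sum>e\<in>E. ind (\<not> hc e \<and> tw ori e = Vtx v)) - 1 + int (wt G v)"
proof -
  have eqS: "{x \<in> sub_edges G P W. sub_target G P W ori x = Vtx v} = (\<lambda>e. (e, Whole)) ` {e \<in> E. \<not> hc e \<and> tw ori e = Vtx v}"
  proof (intro equalityI subsetI)
    fix x assume "x \<in> {x \<in> sub_edges G P W. sub_target G P W ori x = Vtx v}"
    then have x: "x \<in> sub_edges G P W" "sub_target G P W ori x = Vtx v" by auto
    obtain e where e: "x = (e, Whole)" "e \<in> E" "\<not> hc e" using st_Vtx_Whole[OF x] by blast
    have "tw ori e = sub_target G P W ori (e, Whole)" by (simp add: tw_def)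
    then have "tw ori e = Vtx v" using x(2)[unfolded e(1)] by (rule trans)
    then show "x \<in> (\<lambda>e. (e, Whole)) ` {e \<in> E. \<not> hc e \<and> tw ori e = Vtx v}"
      using e by blast
  next
    fix x assume "x \<in> (\<lambda>e. (e, Whole)) ` {e \<in> E. \<not> hc e \<and> tw ori e = Vtx v}"
    then obtain e where e0: "e \<in> {e \<in> E. \<not> hc e \<and> tw ori e = Vtx v}" "x = (e, Whole)" by (rule imageE)
    then have e: "e \<in> E" "\<not> hc e" "tw ori e = Vtx v" by auto
    have "sub_target G P W ori x = Vtx v" using e(3) e0(2) unfolding tw_def by simp
    moreover have "x \<in> sub_edges G P W" using e e0(2) unfolding sub_edges_iff by blast
    ultimately show "x \<in> {x \<in> sub_edges G P W. sub_target G P W ori x = Vtx v}" by blast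
  qed
  have cardI: "card ((\<lambda>e. (e, Whole)) ` {e \<in> E. \<not> hc e \<and> tw ori e = Vtx v}) = card {e \<in> E. \<not> hc e \<and> tw ori e = Vtx v}"
    by (rule card_image) (auto simp: inj_on_def)
  have "Vtx v \<in> sub_verts G P W" unfolding sub_verts_def using assms by blast
  then have "indeg G P W ori (Vtx v) = int (card {e \<in> E. \<not> hc e \<and> tw ori e = Vtx v})"
    unfolding indeg_def using eqS cardI by simp
  also have "\<dots> = (\<Sum>e\<in>E. ind (\<not> hc e \<and> tw ori e = Vtx v))" using finE by (rule card_filter_ind)
  finally have "indeg G P W ori (Vtx v) = (\<Sum>e\<in>E. ind (\<not> hc e \<and> tw ori e = Vtx v))" .
  moreover have "Vtx v \<in> points G" using assms points_Vtx by blast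
  ultimately show ?thesis unfolding D_PW_def wext_def by simp
qed

lemma cyc_sum: assumes "cyclic_orient G P ori" "v \<in> V"
  shows "(\<Sum>e\<in>P. ind (src G e = v) + ind (tgt G e = v) - 2 * ind (head G ori e = v)) = 0"
proof -
  have fP: "finite P" using PE finE finite_subset by blast
  have c: "card {e \<in> P. head G ori e = v} = card {e \<in> P. tail G ori e = v}"
    using assms unfolding cyclic_orient_def by auto
  have "(\<Sum>e\<in>P. ind (src G e = v) + ind (tgt G e = v) - 2 * ind (head G ori e = v))
      = (\<Sum>e\<in>P. ind (tail G ori e = v) - ind (head G ori e = v))"
    by (intro sum.cong) (auto simp: head_def tail_def ind_def)
  also have "\<dots> = int (card {e \<in> P. tail G ori e = v}) - int (card {e \<in> P. head G ori e = v})"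
    using card_filter_ind[OF fP] by (simp add: sum_subtractf)
  finally show ?thesis using c by simp
qed

lemma edge_identity: assumes "e \<in> E"
  shows "ind (src G e = v) * rsI e - ind (tgt G e = v) * lsI e
       = ind (src G e = v) + ind (tgt G e = v) - 2 * ind (\<not> hc e \<and> tw ori e = Vtx v)
         - (if e \<in> P then ind (src G e = v) + ind (tgt G e = v) - 2 * ind (head G ori e = v) else 0)"
proof (cases "e \<in> P")
  case True
  then have "\<not> hc e" using has_crit_iff assms by auto
  then show ?thesis using True st_Whole[OF assms, of ori] by (simp add: rsI_def lsI_def tw_def ind_def)
next
  case False
  note k = kk_range[OF assms] and Lp = Lpos[OF assms]
  consider "kk e = 0" | "kk e = L e" | "0 < kk e" "kk e < L e" using k by linarith
  then show ?thesis
  proof cases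
    case 1
    then have "\<not> hc e" using has_crit_iff assms by auto
    then show ?thesis using False 1 Lp st_Whole[OF assms, of ori] by (simp add: rsI_def lsI_def tw_def ind_def)
  next
    case 2
    then have "\<not> hc e" using has_crit_iff assms by auto
    then show ?thesis using False 2 Lp st_Whole[OF assms, of ori] by (simp add: rsI_def lsI_def tw_def ind_def)
  next
    case 3
    then have "hc e" using has_crit_iff assms False by auto
    then show ?thesis using False 3 by (simp add: rsI_def lsI_def ind_def)
  qed
qed

lemma ord_d: assumes "cyclic_orient G P ori" "p \<in> points G"
  shows "ord_at G d p = of_int (canonical G p - 2 * D_PW G P W ori p)"
proof (cases p)
  case (Pt e t)
  then have "e \<in> E" "0 < t" "t < L e" using assms points_Pt by auto
  then show ?thesis using ord_d_Pt D_Pt Pt by (simp add: canonical_def)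
next
  case (Vtx v)
  then have v: "v \<in> V" using assms points_Vtx by auto
  have fP: "finite P" using PE finE finite_subset by blast
  let ?X = "\<lambda>e. ind (src G e = v) + ind (tgt G e = v) - 2 * ind (head G ori e = v)"
  have "(\<Sum>e\<in>E. ind (src G e = v) * rsI e - ind (tgt G e = v) * lsI e)
     = (\<Sum>e\<in>E. ind (src G e = v) + ind (tgt G e = v) - 2 * ind (\<not> hc e \<and> tw ori e = Vtx v))
       - (\<Sum>e\<in>E. if e \<in> P then ?X e else 0)"
    unfolding sum_subtractf[symmetric] using edge_identity[where v=v and ori=ori] by (intro sum.cong) auto
  also have "(\<Sum>e\<in>E. if e \<in> P then ?X e else 0) = (\<Sum>e\<in>{e \<in> E. e \<in> P}. ?X e)"
    using finE by (simp add: sum_filter_if)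
  also have "{e \<in> E. e \<in> P} = P" using PE by auto
  also have "(\<Sum>e\<in>P. ?X e) = 0" using cyc_sum[OF assms(1) v] .
  also have "(\<Sum>e\<in>E. ind (src G e = v) + ind (tgt G e = v) - 2 * ind (\<not> hc e \<and> tw ori e = Vtx v))
     = int (card {e \<in> E. src G e = v}) + int (card {e \<in> E. tgt G e = v}) - 2 * (\<Sum>e\<in>E. ind (\<not> hc e \<and> tw ori e = Vtx v))"
    using card_filter_ind[OF finE] by (simp add: sum_subtractf sum.distrib sum_distrib_left)
  finally have "(\<Sum>e\<in>E. ind (src G e = v) * rsI e - ind (tgt G e = v) * lsI e)
     = canonical G p - 2 * D_PW G P W ori p"
    using D_Vtx[OF v] v Vtx by (simp add: canonical_def vdeg_def)
  then show ?thesis using ord_d_Vtx[OF v] Vtx by simp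
qed

end

context tc begin

lemma harmonic_zero:
  assumes aff: "\<And>e. e \<in> E \<Longrightarrow> \<exists>c. \<forall>s\<in>{0..L e}. F (at_param G e s) = m e * s + c"
    and harm: "\<And>v. v \<in> V \<Longrightarrow> (\<Sum>e\<in>{e \<in> E. src G e = v}. m e) + (\<Sum>e\<in>{e \<in> E. tgt G e = v}. - m e) = 0"
  shows "\<And>e. e \<in> E \<Longrightarrow> m e = 0"
proof -
  define val where "val u = F (Vtx u)" for u
  have diff: "val (tgt G e) - val (src G e) = m e * L e" if e: "e \<in> E" for e
  proof -
    obtain c where c: "\<forall>s\<in>{0..L e}. F (at_param G e s) = m e * s + c" using aff e by blast
    have Lp: "L e > 0" using Lpos e by auto
    have "F (at_param G e 0) = c" using c Lp by auto
    moreover have "F (at_param G e (L e)) = m e * L e + c" using c Lp by auto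
    ultimately show ?thesis unfolding val_def at_param_def using Lp by auto
  qed
  define M where "M = Max (val ` V)"
  have valM: "u \<in> V \<Longrightarrow> val u \<le> M" for u unfolding M_def using finV by auto
  have "M \<in> val ` V" unfolding M_def using finV Vne by (intro Max_in) auto
  then obtain u0 where u0: "u0 \<in> V" "val u0 = M" by auto
  have key: "(\<forall>e\<in>E. src G e = u \<longrightarrow> m e = 0) \<and> (\<forall>e\<in>E. tgt G e = u \<longrightarrow> m e = 0)"
    if u: "u \<in> V" "val u = M" for u
  proof -
    have A: "\<forall>e\<in>{e \<in> E. src G e = u}. m e \<le> 0"
    proof
      fix e assume "e \<in> {e \<in> E. src G e = u}"
      then have e: "e \<in> E" "src G e = u" by auto
      have "val (tgt G e) \<le> M" using valM tgtV e by auto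
      then have "m e * L e \<le> 0" using diff[OF e(1)] e u by auto
      then show "m e \<le> 0" using Lpos[OF e(1)] by (simp add: mult_le_0_iff)
    qed
    have B: "\<forall>e\<in>{e \<in> E. tgt G e = u}. - m e \<le> 0"
    proof
      fix e assume "e \<in> {e \<in> E. tgt G e = u}"
      then have e: "e \<in> E" "tgt G e = u" by auto
      have "val (src G e) \<le> M" using valM srcV e by auto
      then have "m e * L e \<ge> 0" using diff[OF e(1)] e u by auto
      then show "- m e \<le> 0" using Lpos[OF e(1)] by (simp add: zero_le_mult_iff)
    qed
    have fA: "finite {e \<in> E. src G e = u}" and fB: "finite {e \<in> E. tgt G e = u}" using finE by auto
    have sA: "(\<Sum>e\<in>{e \<in> E. src G e = u}. m e) \<le> 0" using A by (intro sum_nonpos) auto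
    have sB: "(\<Sum>e\<in>{e \<in> E. tgt G e = u}. - m e) \<le> 0" using B by (intro sum_nonpos) auto
    have "(\<Sum>e\<in>{e \<in> E. src G e = u}. m e) = 0" using harm[OF u(1)] sA sB by linarith
    then have "(\<Sum>e\<in>{e \<in> E. src G e = u}. - m e) = 0" by (simp add: sum_negf)
    then have 1: "\<forall>e\<in>{e \<in> E. src G e = u}. - m e = 0"
      using sum_nonneg_eq_0_iff[OF fA, of "\<lambda>e. - m e"] A by auto
    have "(\<Sum>e\<in>{e \<in> E. tgt G e = u}. - m e) = 0" using harm[OF u(1)] sA sB by linarith
    then have "(\<Sum>e\<in>{e \<in> E. tgt G e = u}. m e) = 0" by (simp add: sum_negf)
    then have 2: "\<forall>e\<in>{e \<in> E. tgt G e = u}. m e = 0"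
      using sum_nonneg_eq_0_iff[OF fB, of "\<lambda>e. m e"] B by auto
    show ?thesis using 1 2 by auto
  qed
  have propg: "walk G u es x \<Longrightarrow> u \<in> V \<Longrightarrow> val u = M \<Longrightarrow> x \<in> V \<and> val x = M" for u es x
  proof (induction es arbitrary: u)
    case Nil then show ?case by simp
  next
    case (Cons a es)
    obtain e b where a: "a = (e, b)" by (cases a)
    show ?case
    proof (cases b)
      case True
      then have e: "e \<in> E" "src G e = u" "walk G (tgt G e) es x" using Cons.prems a by auto
      then have "m e = 0" using key[OF Cons.prems(2,3)] by auto
      then have "val (tgt G e) = M" using diff[OF e(1)] e Cons.prems by auto
      then show ?thesis using Cons.IH[OF e(3)] tgtV e by auto
    next
      case False
      then have e: "e \<in> E" "tgt G e = u" "walk G (src G e) es x" using Cons.prems a by auto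
      then have "m e = 0" using key[OF Cons.prems(2,3)] by auto
      then have "val (src G e) = M" using diff[OF e(1)] e Cons.prems by auto
      then show ?thesis using Cons.IH[OF e(3)] srcV e by auto
    qed
  qed
  fix e assume e: "e \<in> E"
  obtain es where "walk G u0 es (src G e)" using conn u0 srcV e by blast
  then have "val (src G e) = M" "src G e \<in> V" using propg u0 by auto
  then show "m e = 0" using key e by auto
qed

lemma rational_SR: assumes "rational_fun G f" shows "SR f"
  unfolding SR_def
proof
  fix e assume "e \<in> E"
  then have "pwi \<int> (\<lambda>s. f (at_param G e s)) 0 (L e)" using assms unfolding rational_fun_def pw_linear_int_iff by blast
  then show "pwi UNIV (\<lambda>s. f (at_param G e s)) 0 (L e)" by (rule pwi_mono) auto
qed

lemma rational_int_slope: assumes "rational_fun G f" "e \<in> E"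
  shows "rslope (\<lambda>s. f (at_param G e s)) 0 \<in> \<int>"
proof -
  have "pwi \<int> (\<lambda>s. f (at_param G e s)) 0 (L e)" using assms unfolding rational_fun_def pw_linear_int_iff by blast
  then obtain m where "m \<in> \<int>" "RA (\<lambda>s. f (at_param G e s)) 0 m" using pwi_RA[of \<int> _ 0 "L e" 0] Lpos[OF assms(2)] by auto
  then show ?thesis using RA_rslope by simp
qed

end

context tc begin

lemma rational_lin:
  assumes "\<And>e. e \<in> E \<Longrightarrow> pwi (Sa e) (\<lambda>s. F1 (at_param G e s)) 0 (L e)"
    and "\<And>e. e \<in> E \<Longrightarrow> pwi (Sb e) (\<lambda>s. F2 (at_param G e s)) 0 (L e)"
    and "\<And>e. e \<in> E \<Longrightarrow> sumset ((*) c1 ` Sa e) ((*) c2 ` Sb e) \<subseteq> \<int>"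
  shows "rational_fun G (\<lambda>q. c1 * F1 q + c2 * F2 q)"
  unfolding rational_fun_def pw_linear_int_iff
proof
  fix e assume e: "e \<in> E"
  have "pwi (sumset ((*) c1 ` Sa e) ((*) c2 ` Sb e)) (\<lambda>s. c1 * F1 (at_param G e s) + c2 * F2 (at_param G e s)) 0 (L e)"
    using pwi_scale[OF assms(1)[OF e], of c1] pwi_scale[OF assms(2)[OF e], of c2] by (rule pwi_add)
  then show "pwi \<int> (\<lambda>s. c1 * F1 (at_param G e s) + c2 * F2 (at_param G e s)) 0 (L e)"
    by (rule pwi_mono) (rule assms(3)[OF e])
qed

end

lemma int3: "{-1, 0, 1::real} \<subseteq> \<int>" by auto

lemma sumset_int1: "sumset ((*) (-1) ` S) ((*) 0 ` S) \<subseteq> \<int>" if "S = {0} \<or> S = {-1, 1::real}" for S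
proof -
  have "sumset ((*) (-1) ` S) ((*) 0 ` S) \<subseteq> {-1, 0, 1}" using that unfolding sumset_def by auto
  then show ?thesis using int3 by blast
qed

lemma sumset_int2: "sumset ((*) (1/2) ` S) ((*) (-1/2) ` S) \<subseteq> \<int>" if "S = {0} \<or> S = {-1, 1::real}" for S
proof -
  have "sumset ((*) (1/2) ` S) ((*) (-1/2) ` S) \<subseteq> {-1, 0, 1}" using that unfolding sumset_def by auto
  then show ?thesis using int3 by blast
qed

lemma sig_cases: "pwc G P W \<Longrightarrow> pwc.sig P e = {0} \<or> pwc.sig P e = {-1, 1}"
  by (simp add: pwc.sig_def)

lemma part2:
  assumes "pwc G P W" "cyclic_orient G P ori"
  shows "lin_equiv G (\<lambda>p. 2 * D_PW G P W ori p) (canonical G)"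
proof -
  interpret A: pwc G P W by (rule assms(1))
  let ?f = "\<lambda>q. (-1) * dPW G P W q + 0 * dPW G P W q"
  have rf: "rational_fun G ?f"
  proof (rule A.rational_lin[where Sa=A.sig and Sb=A.sig])
    fix e assume e: "e \<in> edges G"
    show "pwi (A.sig e) (\<lambda>s. dPW G P W (at_param G e s)) 0 (len G e)" using A.Hd_pwi[OF e] .
    then show "pwi (A.sig e) (\<lambda>s. dPW G P W (at_param G e s)) 0 (len G e)" .
    show "sumset ((*) (- 1) ` A.sig e) ((*) 0 ` A.sig e) \<subseteq> \<int>"
      by (rule sumset_int1) (simp add: A.sig_def)
  qed
  have "\<forall>p\<in>points G. of_int (2 * D_PW G P W ori p - canonical G p) = ord_at G ?f p"
  proof
    fix p assume p: "p \<in> points G"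
    have "ord_at G ?f p = (-1) * ord_at G (dPW G P W) p + 0 * ord_at G (dPW G P W) p"
      using A.ord_lin[OF A.SR_d A.SR_d p] .
    also have "\<dots> = of_int (2 * D_PW G P W ori p - canonical G p)"
      using A.ord_d[OF assms(2) p] by simp
    finally show "of_int (2 * D_PW G P W ori p - canonical G p) = ord_at G ?f p" by simp
  qed
  then show ?thesis unfolding lin_equiv_def using rf by blast
qed

lemma part1_eq:
  assumes "pwc G P W" "cyclic_orient G P ori" "pwc G P W'" "cyclic_orient G P ori'"
  shows "lin_equiv G (D_PW G P W ori) (D_PW G P W' ori')"
proof -
  interpret A: pwc G P W by (rule assms(1))
  interpret B: pwc G P W' by (rule assms(3))
  let ?f = "\<lambda>q. (1/2) * dPW G P W' q + (-1/2) * dPW G P W q"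
  have sig: "B.sig = A.sig" unfolding A.sig_def B.sig_def by simp
  have rf: "rational_fun G ?f"
  proof (rule A.rational_lin[where Sa=A.sig and Sb=A.sig])
    fix e assume e: "e \<in> edges G"
    show "pwi (A.sig e) (\<lambda>s. dPW G P W' (at_param G e s)) 0 (len G e)" using B.Hd_pwi[OF e] sig by simp
    show "pwi (A.sig e) (\<lambda>s. dPW G P W (at_param G e s)) 0 (len G e)" using A.Hd_pwi[OF e] .
    show "sumset ((*) (1 / 2) ` A.sig e) ((*) (- 1 / 2) ` A.sig e) \<subseteq> \<int>"
      by (rule sumset_int2) (simp add: A.sig_def)
  qed
  have "\<forall>p\<in>points G. of_int (D_PW G P W ori p - D_PW G P W' ori' p) = ord_at G ?f p"
  proof
    fix p assume p: "p \<in> points G"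
    have "ord_at G ?f p = (1/2) * ord_at G (dPW G P W') p + (-1/2) * ord_at G (dPW G P W) p"
      using A.ord_lin[OF B.SR_d A.SR_d p] .
    also have "\<dots> = of_int (D_PW G P W ori p - D_PW G P W' ori' p)"
      using A.ord_d[OF assms(2) p] B.ord_d[OF assms(4) p] by (simp add: algebra_simps)
    finally show "of_int (D_PW G P W ori p - D_PW G P W' ori' p) = ord_at G ?f p" by simp
  qed
  then show ?thesis unfolding lin_equiv_def using rf by blast
qed

lemma part1_neq:
  assumes "pwc G P W" "cyclic_orient G P ori" "pwc G P' W'" "cyclic_orient G P' ori'"
    and "lin_equiv G (D_PW G P W ori) (D_PW G P' W' ori')"
  shows "P = P'"
proof (rule ccontr)
  assume neq: "P \<noteq> P'"
  interpret A: pwc G P W by (rule assms(1))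
  interpret B: pwc G P' W' by (rule assms(3))
  obtain f where rf: "rational_fun G f"
    and ef: "\<forall>p\<in>points G. of_int (D_PW G P W ori p - D_PW G P' W' ori' p) = ord_at G f p"
    using assms(5) unfolding lin_equiv_def by blast
  define w where "w = (\<lambda>q. 1 * dPW G P W q + (-1) * dPW G P' W' q)"
  define v where "v = (\<lambda>q. 2 * f q + 1 * w q)"
  have SRf: "A.SR f" using A.rational_SR[OF rf] .
  have SRw: "A.SR w" unfolding w_def using A.SR_lin[OF A.SR_d B.SR_d] .
  have SRv: "A.SR v" unfolding v_def using A.SR_lin[OF SRf SRw] .
  have ordv: "ord_at G v p = 0" if p: "p \<in> points G" for p
  proof -
    have "ord_at G v p = 2 * ord_at G f p + 1 * ord_at G w p" unfolding v_def using A.ord_lin[OF SRf SRw p] .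
    also have "ord_at G w p = 1 * ord_at G (dPW G P W) p + (-1) * ord_at G (dPW G P' W') p"
      unfolding w_def using A.ord_lin[OF A.SR_d B.SR_d p] .
    finally have "ord_at G v p = 2 * ord_at G f p + 1 * (1 * ord_at G (dPW G P W) p + (-1) * ord_at G (dPW G P' W') p)" .
    moreover have "ord_at G f p = of_int (D_PW G P W ori p - D_PW G P' W' ori' p)" using ef p by simp
    ultimately show ?thesis using A.ord_d[OF assms(2) p] B.ord_d[OF assms(4) p] by simp
  qed
  define mm where "mm e = rslope (\<lambda>s. v (at_param G e s)) 0" for e
  have affv: "\<exists>c. \<forall>s\<in>{0..len G e}. v (at_param G e s) = mm e * s + c" if e: "e \<in> edges G" for e
  proof -
    have pw: "pwi UNIV (\<lambda>s. v (at_param G e s)) 0 (len G e)" using SRv e unfolding A.SR_def by blast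
    have "\<exists>m c. \<forall>s\<in>{0..len G e}. v (at_param G e s) = m * s + c"
    proof (rule pwi_affine[OF pw])
      fix t assume t: "0 < t" "t < len G e"
      then have "Pt e t \<in> points G" using A.points_Pt e by auto
      from ordv[OF this] show "rslope (\<lambda>s. v (at_param G e s)) t = lslope (\<lambda>s. v (at_param G e s)) t"
        by simp
    qed
    then obtain m c where mc: "\<forall>s\<in>{0..len G e}. v (at_param G e s) = m * s + c" by blast
    have "mm e = m" unfolding mm_def using RA_rslope[OF RA_of[OF mc]] A.Lpos[OF e] by simp
    then show ?thesis using mc by blast
  qed
  have harm: "(\<Sum>e\<in>{e \<in> edges G. src G e = u}. mm e) + (\<Sum>e\<in>{e \<in> edges G. tgt G e = u}. - mm e) = 0"
    if u: "u \<in> verts G" for u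
  proof -
    have ls: "lslope (\<lambda>s. v (at_param G e s)) (len G e) = mm e" if e: "e \<in> edges G" for e
    proof -
      obtain c where c: "\<forall>s\<in>{0..len G e}. v (at_param G e s) = mm e * s + c" using affv e by blast
      show ?thesis using LA_lslope[OF LA_of[OF c]] A.Lpos[OF e] by simp
    qed
    have "Vtx u \<in> points G" using A.points_Vtx u by simp
    from ordv[OF this] have "ord_at G v (Vtx u) = 0" .
    moreover have "(\<Sum>e\<in>{e \<in> edges G. tgt G e = u}. - lslope (\<lambda>t. v (at_param G e t)) (len G e))
        = (\<Sum>e\<in>{e \<in> edges G. tgt G e = u}. - mm e)" using ls by (intro sum.cong) auto
    ultimately show ?thesis unfolding ord_at.simps mm_def[symmetric] by simp
  qed
  have mm0: "\<And>e. e \<in> edges G \<Longrightarrow> mm e = 0"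
    by (rule A.harmonic_zero[of v mm]) (use affv harm in auto)
  obtain e where e: "e \<in> edges G" "(e \<in> P \<and> e \<notin> P') \<or> (e \<in> P' \<and> e \<notin> P)"
    using neq A.PE B.PE by blast
  have Lp: "len G e > 0" using A.Lpos e by auto
  have r1: "rslope (\<lambda>s. v (at_param G e s)) 0 = 2 * rslope (\<lambda>s. f (at_param G e s)) 0 + 1 * rslope (\<lambda>s. w (at_param G e s)) 0"
    unfolding v_def using A.rslope_lin[OF SRf SRw e(1), of 0 2 1] Lp by simp
  have r2: "rslope (\<lambda>s. w (at_param G e s)) 0 = 1 * rslope (\<lambda>s. dPW G P W (at_param G e s)) 0 + (-1) * rslope (\<lambda>s. dPW G P' W' (at_param G e s)) 0"
    unfolding w_def using A.rslope_lin[OF A.SR_d B.SR_d e(1), of 0 1 "-1"] Lp by simp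
  obtain k where k: "rslope (\<lambda>s. f (at_param G e s)) 0 = of_int k"
    using A.rational_int_slope[OF rf e(1)] by (auto elim: Ints_cases)
  have "0 = 2 * of_int k + of_int (A.rsI e) - (of_int (B.rsI e) :: real)"
    using r1 r2 k mm0[OF e(1)] A.rs_d[OF e(1)] B.rs_d[OF e(1)] unfolding mm_def by simp
  then have "2 * k + A.rsI e - B.rsI e = 0" by linarith
  then show False using e(2) unfolding A.rsI_def B.rsI_def by (auto split: if_splits) presburger+
qed

theorem proposition3p4:
  fixes G :: "('v, 'e) tcurve"
    and P P' :: "'e set" and W W' :: "'v set" and ori ori' :: "'e \<Rightarrow> bool"
  assumes "tropical_curve G"
    and "even_subgraph G P" and "W \<subseteq> verts G" and "P \<noteq> {} \<or> W \<noteq> {}"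
    and "cyclic_orient G P ori"
    and "even_subgraph G P'" and "W' \<subseteq> verts G" and "P' \<noteq> {} \<or> W' \<noteq> {}"
    and "cyclic_orient G P' ori'"
  shows "(lin_equiv G (D_PW G P W ori) (D_PW G P' W' ori') \<longleftrightarrow> P = P')
         \<and> lin_equiv G (\<lambda>p. 2 * D_PW G P W ori p) (canonical G)"
proof -
  have A: "pwc G P W" using assms(1-4) by (intro pwc.intro tc.intro pwc_axioms.intro) auto
  have B: "pwc G P' W'" using assms(1,6-8) by (intro pwc.intro tc.intro pwc_axioms.intro) auto
  have 1: "lin_equiv G (D_PW G P W ori) (D_PW G P' W' ori') \<longleftrightarrow> P = P'"
  proof
    assume "lin_equiv G (D_PW G P W ori) (D_PW G P' W' ori')"
    then show "P = P'" using part1_neq[OF A assms(5) B assms(9)] by blast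
  next
    assume e: "P = P'"
    have B': "pwc G P W'" using B e by simp
    have C': "cyclic_orient G P ori'" using assms(9) e by simp
    show "lin_equiv G (D_PW G P W ori) (D_PW G P' W' ori')"
      using part1_eq[OF A assms(5) B' C'] e by simp
  qed
  show ?thesis using 1 part2[OF A assms(5)] by blast
qed

end
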